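(* Let $B\in\mathbb{S}_{2n}$ be an involution without fixed points with $n\ge2$ (an arc diagram with more than one arc). Then $\pi(B)=\pi'(B)$ in $\mathcal{A}$; in particular $\pi'(B)$ is a linear combination of classes of fixed-point-free involutions (the coefficients of all products containing classes of permutations with fixed points vanish).
   Context: A permutation $\alpha\in\mathbb{S}_m$ is connected if no proper nonempty subinterval $\{k+1,\dots,n\}\subsetneq[m]$ is invariant under $\alpha$. Two connected $\alpha_1,\alpha_2\in\mathbb{S}_m$ are rotationally equivalent if $\alpha_2=\sigma_m^{-k}\alpha_1\sigma_m^k$ for some $k$, $\sigma_m=(1,\dots,m)$. Every $\alpha\in\mathbb{S}_m$ determines a multiset of connected permutations recursively: $\{\alpha\}$ if $\alpha$ is connected; otherwise, for an invariant proper subinterval $I$, the union of the multisets for $\alpha|_I$ and $\alpha|_{[m]\setminus I}$. $\mathcal{A}$ is the free commutative (polynomial) algebra generated by rotational equivalence classes of connected permutations, and $[\alpha]\in\mathcal{A}$ denotes the product of the classes in the multiset of $\alpha$ ($[\text{empty}]=1$). For $R\subset[m]$, $\alpha|_R$ is the permutation of $R$ sending $r$ to the first element of $\alpha(r),\alpha^2(r),\dots$ lying in $R$, identified with $\mathbb{S}_{|R|}$ by the order-preserving bijection. For $\alpha\in\mathbb{S}_m$ with set of cycles $V(\alpha)$: $\pi(\alpha)=\sum_{k\ge1}(-1)^{k-1}(k-1)!\sum_{\{I_1,\dots,I_k\}}[\alpha|_{I_1}]\cdots[\alpha|_{I_k}]$, over unordered partitions of $V(\alpha)$ into $k$ nonempty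 blocks, $\alpha|_{I}$ meaning restriction to the union of the cycles in $I$; $\pi'(\alpha)=\sum_{k\ge1}(-1)^{k-1}(k-1)!\sum_{\{L_1,\dots,L_k\}}[\alpha|_{L_1}]\cdots[\alpha|_{L_k}]$, over unordered partitions of $[m]$ into $k$ nonempty blocks. *)

theory Defs
  imports "HOL-Combinatorics.Permutations" "HOL-Library.Multiset" "HOL-Library.Disjoint_Sets"
begin

text \<open>A permutation of [m] = {1..m} is a pair (m, p) with p permuting {1..m}
  (identity outside). \<close>

type_synonym perm = "nat \<times> (nat \<Rightarrow> nat)"

definition is_perm :: "perm \<Rightarrow> bool" where
  "is_perm a \<longleftrightarrow> snd a permutes {1..fst a}"

definition inv_interval :: "perm \<Rightarrow> nat set \<Rightarrow> bool" where
  "inv_interval a I \<longleftrightarrow> (\<exists>k n. I = {k+1..n}) \<and> I \<noteq> {} \<and> I \<subset> {1..fst a}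
      \<and> snd a ` I \<subseteq> I"

definition connected_perm :: "perm \<Rightarrow> bool" where
  "connected_perm a \<longleftrightarrow> \<not> (\<exists>I. inv_interval a I)"

text \<open>Order-preserving standardisation of a permutation q of a finite set R
  to a permutation of {1..card R}.\<close>
definition std :: "nat set \<Rightarrow> (nat \<Rightarrow> nat) \<Rightarrow> perm" where
  "std R q = (card R, (\<lambda>i. if i \<in> {1..card R}
       then card {x\<in>R. x < q (sorted_list_of_set R ! (i - 1))} + 1 else i))"

definition first_return :: "(nat \<Rightarrow> nat) \<Rightarrow> nat set \<Rightarrow> nat \<Rightarrow> nat" where
  "first_return p R r = (p ^^ (LEAST k. 0 < k \<and> (p ^^ k) r \<in> R)) r"

definition restr :: "perm \<Rightarrow> nat set \<Rightarrow> perm" where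
  "restr a R = std R (first_return (snd a) R)"

text \<open>The multiset of connected permutations determined by a permutation
  (computed with enough fuel: the recursion depth is at most m).\<close>
fun comps_aux :: "nat \<Rightarrow> perm \<Rightarrow> perm multiset" where
  "comps_aux 0 a = {#}"
| "comps_aux (Suc f) a =
     (if fst a = 0 then {#}
      else if connected_perm a then {#a#}
      else (let I = (SOME I. inv_interval a I)
            in comps_aux f (restr a I) + comps_aux f (restr a ({1..fst a} - I))))"

definition comps :: "perm \<Rightarrow> perm multiset" where
  "comps a = comps_aux (Suc (fst a)) a"

definition rot :: "nat \<Rightarrow> nat \<Rightarrow> nat" where
  "rot m i = (if 1 \<le> i \<and> i < m then i + 1 else if i = m \<and> m \<ge> 1 then 1 else i)"

definition rot_inv :: "nat \<Rightarrow> nat \<Rightarrow> nat" where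
  "rot_inv m i = (if 1 < i \<and> i \<le> m then i - 1 else if i = 1 \<and> m \<ge> 1 then m else i)"

text \<open>Rotational equivalence class of a (connected) permutation: a generator of A.\<close>
definition rotclass :: "perm \<Rightarrow> perm set" where
  "rotclass a = {(fst a, (rot_inv (fst a) ^^ k) \<circ> snd a \<circ> (rot (fst a) ^^ k)) | k. True}"

text \<open>[alpha]: the monomial (product of classes), represented as a multiset of generators.\<close>
definition bracket :: "perm \<Rightarrow> perm set multiset" where
  "bracket a = image_mset rotclass (comps a)"

text \<open>Elements of the free commutative algebra A (over Z) are represented by their
  coefficient functions on monomials (multisets of generators).\<close>
type_synonym algA = "perm set multiset \<Rightarrow> int"

definition cycles :: "perm \<Rightarrow> nat set set" where
  "cycles a = {{(snd a ^^ k) x | k. True} | x. x \<in> {1..fst a}}"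

definition pi_A :: "perm \<Rightarrow> algA" where
  "pi_A a N = (\<Sum>P\<in>{P. partition_on (cycles a) P}.
      (-1) ^ (card P - 1) * int (fact (card P - 1)) *
      (if (\<Sum>I\<in>P. bracket (restr a (\<Union>I))) = N then 1 else 0))"

definition pi'_A :: "perm \<Rightarrow> algA" where
  "pi'_A a N = (\<Sum>P\<in>{P. partition_on {1..fst a} P}.
      (-1) ^ (card P - 1) * int (fact (card P - 1)) *
      (if (\<Sum>L\<in>P. bracket (restr a L)) = N then 1 else 0))"

definition fpf_involution :: "perm \<Rightarrow> bool" where
  "fpf_involution a \<longleftrightarrow> is_perm a \<and> (\<forall>x. snd a (snd a x) = x)
      \<and> (\<forall>x\<in>{1..fst a}. snd a x \<noteq> x)"

end

theory Submission
  imports Defs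
begin

lemma sl_basic:
  assumes "finite R"
  shows "set (sorted_list_of_set R) = R" "sorted_wrt (<) (sorted_list_of_set R)"
    "distinct (sorted_list_of_set R)" "length (sorted_list_of_set R) = card R"
  using assms by auto

lemma card_less_nth:
  assumes "finite R" "i < card R"
  shows "card {y\<in>R. y < sorted_list_of_set R ! i} = i"
proof -
  let ?xs = "sorted_list_of_set R"
  have len: "length ?xs = card R" using assms by simp
  have st: "sorted_wrt (<) ?xs" using assms by simp
  have lt: "\<And>j. j < card R \<Longrightarrow> ?xs ! j < ?xs ! i \<longleftrightarrow> j < i"
  proof -
    fix j assume j: "j < card R"
    show "?xs ! j < ?xs ! i \<longleftrightarrow> j < i"
    proof
      assume "?xs ! j < ?xs ! i"
      then show "j < i" using st j assms len sorted_wrt_nth_less[OF st, of i j]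
        by (metis not_less_iff_gr_or_eq order.asym)
    next
      assume "j < i" then show "?xs ! j < ?xs ! i" using st assms len sorted_wrt_nth_less by metis
    qed
  qed
  have "{y\<in>R. y < ?xs ! i} = (!) ?xs ` {..<i}"
  proof
    show "{y\<in>R. y < ?xs ! i} \<subseteq> (!) ?xs ` {..<i}"
    proof
      fix y assume "y \<in> {y\<in>R. y < ?xs ! i}"
      then have y: "y \<in> R" "y < ?xs ! i" by auto
      then obtain j where "j < card R" "y = ?xs ! j" using assms len by (metis in_set_conv_nth sl_basic(1))
      then show "y \<in> (!) ?xs ` {..<i}" using lt y by auto
    qed
  next
    show "(!) ?xs ` {..<i} \<subseteq> {y\<in>R. y < ?xs ! i}"
      using lt assms len apply auto
      by (metis assms(1) len less_trans nth_mem sl_basic(1))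
  qed
  moreover have "inj_on ((!) ?xs) {..<i}"
    using assms len by (auto simp: inj_on_def nth_eq_iff_index_eq)
  ultimately show ?thesis by (simp add: card_image)
qed

definition en :: "nat set \<Rightarrow> nat \<Rightarrow> nat" where
  "en R i = sorted_list_of_set R ! (i - 1)"
definition rk :: "nat set \<Rightarrow> nat \<Rightarrow> nat" where
  "rk R x = card {y\<in>R. y < x} + 1"

lemma en_in: "finite R \<Longrightarrow> i \<in> {1..card R} \<Longrightarrow> en R i \<in> R"
proof -
  assume a: "finite R" "i \<in> {1..card R}"
  then have "i - 1 < length (sorted_list_of_set R)" by auto
  then show ?thesis unfolding en_def using a(1) nth_mem sl_basic(1) by metis
qed

lemma rk_en: "finite R \<Longrightarrow> i \<in> {1..card R} \<Longrightarrow> rk R (en R i) = i"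
  unfolding en_def rk_def using card_less_nth[of R "i - 1"] by auto

lemma rk_in: assumes "finite R" "x \<in> R" shows "rk R x \<in> {1..card R}"
proof -
  have "{y\<in>R. y < x} \<subset> R" using assms by auto
  then have "card {y\<in>R. y < x} < card R" using assms by (simp add: psubset_card_mono)
  then show ?thesis unfolding rk_def by auto
qed

lemma en_rk: assumes "finite R" "x \<in> R" shows "en R (rk R x) = x"
proof -
  obtain j where j: "j < card R" "x = sorted_list_of_set R ! j"
    using assms by (metis in_set_conv_nth sl_basic(1,4))
  then have "rk R x = j + 1" unfolding rk_def using card_less_nth[OF assms(1) j(1)] by simp
  then show ?thesis using j unfolding en_def by simp
qed

lemma en_mono: assumes "finite R" "i \<in> {1..card R}" "j \<in> {1..card R}" "i < j"
  shows "en R i < en R j"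
  unfolding en_def using assms sorted_wrt_nth_less[OF sl_basic(2)[OF assms(1)], of "i - 1" "j - 1"]
  by auto

lemma rk_mono: assumes "finite R" "x \<in> R" "y \<in> R" "x < y" shows "rk R x < rk R y"
proof (rule ccontr)
  assume "\<not> rk R x < rk R y"
  then have "rk R y < rk R x \<or> rk R y = rk R x" by auto
  then show False
  proof
    assume "rk R y < rk R x" then have "en R (rk R y) < en R (rk R x)" using en_mono rk_in assms by blast
    then show False using en_rk assms by simp
  next
    assume "rk R y = rk R x" then show False using en_rk assms by (metis less_irrefl)
  qed
qed

lemma rk_inj: assumes "finite R" "x \<in> R" "y \<in> R" "rk R x = rk R y" shows "x = y"
  by (metis assms en_rk)

lemma std_fst: "fst (std R q) = card R" unfolding std_def by simp

lemma std_snd: "snd (std R q) i = (if i \<in> {1..card R} then rk R (q (en R i)) else i)"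
  unfolding std_def rk_def en_def by (simp only: snd_conv)

lemma std_eq: "std R q = (card R, \<lambda>i. if i \<in> {1..card R} then rk R (q (en R i)) else i)"
  unfolding std_def rk_def en_def by simp

lemma std_cong: assumes "finite R" "\<And>x. x \<in> R \<Longrightarrow> q x = q' x" shows "std R q = std R q'"
  unfolding std_eq using assms en_in by auto

lemma rk_transport:
  assumes "finite I" "strict_mono_on I h" "x \<in> I"
  shows "rk (h ` I) (h x) = rk I x"
proof -
  have sm: "\<And>u v. u \<in> I \<Longrightarrow> v \<in> I \<Longrightarrow> u < v \<Longrightarrow> h u < h v"
    using assms(2) unfolding strict_mono_on_def by blast
  have "{y\<in>h ` I. y < h x} = h ` {y\<in>I. y < x}"
  proof
    show "{y\<in>h ` I. y < h x} \<subseteq> h ` {y\<in>I. y < x}"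
    proof
      fix y assume "y \<in> {y\<in>h ` I. y < h x}"
      then obtain z where z: "z \<in> I" "y = h z" "h z < h x" by auto
      have "z < x"
      proof (rule ccontr)
        assume "\<not> z < x" then have "x < z \<or> x = z" by auto
        then show False
        proof
          assume "x < z" then have "h x < h z" using sm z(1) assms(3) by blast
          then show False using z(3) by simp
        next
          assume "x = z" then show False using z(3) by simp
        qed
      qed
      then show "y \<in> h ` {y\<in>I. y < x}" using z by auto
    qed
  next
    show "h ` {y\<in>I. y < x} \<subseteq> {y\<in>h ` I. y < h x}"
      using sm assms(3) by auto
  qed
  moreover have "inj_on h {y\<in>I. y < x}"
  proof -
    have "inj_on h I" using assms(2) strict_mono_on_imp_inj_on by blast
    then show ?thesis by (rule inj_on_subset) auto
  qed
  ultimately show ?thesis unfolding rk_def by (simp add: card_image)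
qed

lemma std_transport:
  assumes "finite I" "strict_mono_on I h" "T = h ` I"
    "\<And>i. i \<in> I \<Longrightarrow> q' i \<in> I" "\<And>i. i \<in> I \<Longrightarrow> h (q' i) = q (h i)"
  shows "std I q' = std T q"
proof -
  have inj: "inj_on h I" using assms strict_mono_on_imp_inj_on by blast
  have cT: "card T = card I" using assms inj by (simp add: card_image)
  have fT: "finite T" using assms by simp
  have enT: "en T i = h (en I i)" if "i \<in> {1..card I}" for i
  proof -
    have "rk T (h (en I i)) = i" using rk_transport[OF assms(1,2) en_in[OF assms(1) that]] rk_en[OF assms(1) that] assms(3) by simp
    then have "en T (rk T (h (en I i))) = en T i" by simp
    moreover have "en T (rk T (h (en I i))) = h (en I i)"
      using en_rk[OF fT] en_in[OF assms(1) that] assms(3) by simp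
    ultimately show ?thesis by simp
  qed
  have "rk T (q (en T i)) = rk I (q' (en I i))" if "i \<in> {1..card I}" for i
  proof -
    have "q (en T i) = h (q' (en I i))" using enT[OF that] assms(5) en_in[OF assms(1) that] by simp
    then show ?thesis using rk_transport[OF assms(1,2)] assms(3,4) en_in[OF assms(1) that] by simp
  qed
  then show ?thesis unfolding std_eq cT by auto
qed

lemma FR_gen:
  assumes "f (f x) = x" "x \<in> R"
  shows "first_return f R x = (if f x \<in> R then f x else x)"
proof (cases "f x \<in> R")
  case True
  have "(LEAST k. 0 < k \<and> (f ^^ k) x \<in> R) = 1"
    by (rule Least_equality) (use True in auto)
  then show ?thesis unfolding first_return_def using True by simp
next
  case False
  have "(LEAST k. 0 < k \<and> (f ^^ k) x \<in> R) = 2"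
  proof (rule Least_equality)
    show "0 < (2::nat) \<and> (f ^^ 2) x \<in> R" using assms by (simp add: numeral_2_eq_2)
  next
    fix y :: nat assume "0 < y \<and> (f ^^ y) x \<in> R"
    then show "2 \<le> y" using False by (cases y) (auto simp: numeral_2_eq_2, case_tac nat, auto)
  qed
  then show ?thesis unfolding first_return_def using False assms by (simp add: numeral_2_eq_2)
qed

locale arcs =
  fixes n :: nat and B :: "nat \<Rightarrow> nat"
  assumes n2: "n \<ge> 2" and perm: "B permutes {1..2*n}" and inv: "\<forall>x. B (B x) = x"
    and fpf: "\<forall>x\<in>{1..2*n}. B x \<noteq> x"
begin

abbreviation "U \<equiv> {1..2*n}"

definition beta :: "nat set \<Rightarrow> nat \<Rightarrow> nat" where
  "beta S i = (if B i \<in> S then B i else i)"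

definition sp :: "nat set \<Rightarrow> perm" where
  "sp S = std S (beta S)"

definition conv :: "nat set \<Rightarrow> nat set \<Rightarrow> bool" where
  "conv S T \<longleftrightarrow> (\<forall>x\<in>S. \<forall>y\<in>S. \<forall>z\<in>S. x < y \<longrightarrow> y < z \<longrightarrow> x \<in> T \<longrightarrow> z \<in> T \<longrightarrow> y \<in> T)"

definition closed :: "nat set \<Rightarrow> nat set \<Rightarrow> bool" where
  "closed S T \<longleftrightarrow> (\<forall>x\<in>T. B x \<in> S \<longrightarrow> B x \<in> T)"

definition good :: "nat set \<Rightarrow> nat set \<Rightarrow> bool" where
  "good S T \<longleftrightarrow> T \<noteq> {} \<and> T \<subset> S \<and> conv S T \<and> closed S T"

lemma BB[simp]: "B (B x) = x" using inv by blast

lemma BU: "x \<in> U \<Longrightarrow> B x \<in> U" using permutes_in_image[OF perm, of x] by simp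

lemma beta_in: "x \<in> S \<Longrightarrow> beta S x \<in> S" unfolding beta_def by auto

lemma beta_beta: "x \<in> S \<Longrightarrow> beta S (beta S x) = x" unfolding beta_def by auto

lemma restr_sp: assumes "S \<subseteq> U" shows "restr (2*n, B) S = sp S"
proof -
  have f: "finite S" using assms finite_subset by blast
  show ?thesis unfolding restr_def sp_def
    by (rule std_cong[OF f]) (simp add: FR_gen beta_def)
qed

lemma sp_snd: "i \<in> {1..card S} \<Longrightarrow> snd (sp S) i = rk S (beta S (en S i))"
  unfolding sp_def by (simp add: std_snd)

lemma sp_fst[simp]: "fst (sp S) = card S" unfolding sp_def by (simp add: std_fst)

lemma sp_snd_in: assumes "finite S" "i \<in> {1..card S}" shows "snd (sp S) i \<in> {1..card S}"
  using sp_snd[OF assms(2)] rk_in[OF assms(1) beta_in[OF en_in[OF assms]]] by simp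

lemma sp_snd_inv: assumes "finite S" "i \<in> {1..card S}" shows "snd (sp S) (snd (sp S) i) = i"
proof -
  have x: "en S i \<in> S" using en_in assms by blast
  have "snd (sp S) (snd (sp S) i) = rk S (beta S (en S (rk S (beta S (en S i)))))"
    using sp_snd sp_snd_in[OF assms] sp_snd[OF assms(2)] by simp
  also have "\<dots> = rk S (beta S (beta S (en S i)))" using en_rk[OF assms(1) beta_in[OF x]] by simp
  also have "\<dots> = i" using beta_beta[OF x] rk_en[OF assms] by simp
  finally show ?thesis .
qed

lemma en_bij: assumes f: "finite S" shows "bij_betw (en S) {1..card S} S"
proof (rule bij_betw_byWitness[where f'="rk S"])
  show "\<forall>a\<in>{1..card S}. rk S (en S a) = a" using rk_en[OF f] by blast
  show "\<forall>a'\<in>S. en S (rk S a') = a'" using en_rk[OF f] by blast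
  show "en S ` {1..card S} \<subseteq> S" using en_in[OF f] by blast
  show "rk S ` S \<subseteq> {1..card S}" using rk_in[OF f] by blast
qed

lemma restr_sp_I:
  assumes S: "S \<subseteq> U" and I: "I \<subseteq> {1..card S}"
  shows "restr (sp S) I = sp (en S ` I)"
proof -
  have f: "finite S" using S finite_subset by blast
  have fI: "finite I" using I finite_subset by blast
  let ?p = "snd (sp S)"
  let ?T = "en S ` I"
  have "restr (sp S) I = std I (\<lambda>i. if ?p i \<in> I then ?p i else i)"
    unfolding restr_def
    by (rule std_cong[OF fI]) (use FR_gen sp_snd_inv[OF f] I in auto)
  also have "\<dots> = std ?T (beta ?T)"
  proof (rule std_transport[OF fI])
    show "strict_mono_on I (en S)" unfolding strict_mono_on_def using en_mono[OF f] I by blast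
    show "?T = en S ` I" by simp
    show "\<And>i. i \<in> I \<Longrightarrow> (if ?p i \<in> I then ?p i else i) \<in> I" by simp
    show "en S (if ?p i \<in> I then ?p i else i) = beta ?T (en S i)" if i: "i \<in> I" for i
    proof -
      have i': "i \<in> {1..card S}" using i I by blast
      define x where "x = en S i"
      have x: "x \<in> S" using en_in[OF f i'] x_def by simp
      have pi: "?p i = rk S (beta S x)" using sp_snd[OF i'] x_def by simp
      have eq: "?p i \<in> I \<longleftrightarrow> beta S x \<in> ?T"
      proof
        assume "?p i \<in> I"
        then have "en S (?p i) \<in> ?T" by blast
        then show "beta S x \<in> ?T" using pi en_rk[OF f beta_in[OF x]] by simp
      next
        assume "beta S x \<in> ?T"
        then obtain j where j: "j \<in> I" "beta S x = en S j" by blast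
        then show "?p i \<in> I" using pi rk_en[OF f] I by auto
      qed
      have TS: "?T \<subseteq> S" using en_in[OF f] I by blast
      show ?thesis
      proof (cases "?p i \<in> I")
        case True
        then have "beta S x \<in> ?T" using eq by simp
        then have "beta S x = beta ?T x" unfolding beta_def using TS by auto
        then show ?thesis using True pi en_rk[OF f beta_in[OF x]] x_def by simp
      next
        case False
        then have "beta S x \<notin> ?T" using eq by simp
        then have "beta ?T x = x" unfolding beta_def using TS by (auto split: if_splits)
        then show ?thesis using False x_def by simp
      qed
    qed
  qed
  finally show ?thesis unfolding sp_def .
qed

lemma en_compl: assumes "finite S" "I \<subseteq> {1..card S}"
  shows "en S ` ({1..card S} - I) = S - en S ` I"
proof -
  have b: "bij_betw (en S) {1..card S} S" using en_bij assms by blast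
  then have "inj_on (en S) {1..card S}" by (simp add: bij_betw_def)
  then have "en S ` ({1..card S} - I) = en S ` {1..card S} - en S ` I"
    using assms(2) inj_on_image_set_diff by blast
  then show ?thesis using b by (simp add: bij_betw_def)
qed

end

context arcs begin

lemma inv_good:
  assumes S: "S \<subseteq> U" and I: "inv_interval (sp S) I"
  shows "good S (en S ` I)" "I \<subseteq> {1..card S}"
proof -
  have f: "finite S" using S finite_subset by blast
  obtain k m where km: "I = {k+1..m}" using I unfolding inv_interval_def by blast
  have ne: "I \<noteq> {}" and sub: "I \<subset> {1..card S}" and inv: "snd (sp S) ` I \<subseteq> I"
    using I unfolding inv_interval_def by auto
  show IS: "I \<subseteq> {1..card S}" using sub by blast
  let ?T = "en S ` I"
  have b: "bij_betw (en S) {1..card S} S" using en_bij[OF f] .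
  have TS: "?T \<subseteq> S" using en_in[OF f] IS by blast
  have "?T \<noteq> S"
  proof
    assume eq: "?T = S"
    obtain i where i: "i \<in> {1..card S} - I" using psubset_imp_ex_mem[OF sub] by blast
    then have i: "i \<in> {1..card S}" "i \<notin> I" by auto
    have ei: "en S i \<in> S" using en_in[OF f i(1)] .
    have "en S i \<in> en S ` I" using ei eq by (simp only:)
    then obtain j where j: "j \<in> I" "en S j = en S i" by (auto simp only: image_iff)
    have "j = rk S (en S j)" using rk_en[OF f, of j] j(1) IS by (simp only: subset_iff)
    also have "\<dots> = rk S (en S i)" using j(2) by (simp only:)
    also have "\<dots> = i" using rk_en[OF f i(1)] .
    finally have "j = i" .
    then show False using i j by simp
  qed
  moreover have "conv S ?T" unfolding conv_def
  proof (intro ballI impI)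
    fix x y z assume xyz: "x \<in> S" "y \<in> S" "z \<in> S" "x < y" "y < z" "x \<in> ?T" "z \<in> ?T"
    have "rk S x \<in> I" using xyz(6) rk_en[OF f] IS by auto
    moreover have "rk S z \<in> I" using xyz(7) rk_en[OF f] IS by auto
    moreover have "rk S x < rk S y" "rk S y < rk S z" using rk_mono[OF f] xyz by auto
    ultimately have "rk S y \<in> I" using km by auto
    then show "y \<in> ?T" using en_rk[OF f xyz(2)] by (metis imageI)
  qed
  moreover have "closed S ?T" unfolding closed_def
  proof (intro ballI impI)
    fix x assume x: "x \<in> ?T" "B x \<in> S"
    then obtain i where i: "i \<in> I" "x = en S i" by blast
    have "snd (sp S) i = rk S (beta S x)" using sp_snd i IS by blast
    also have "\<dots> = rk S (B x)" using x(2) unfolding beta_def by simp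
    finally have "rk S (B x) \<in> I" using inv i(1) by (metis image_subset_iff)
    then show "B x \<in> ?T" using en_rk[OF f x(2)] by (metis imageI)
  qed
  ultimately show "good S ?T" unfolding good_def using ne TS by blast
qed

lemma good_inv:
  assumes S: "S \<subseteq> U" and g: "good S T"
  shows "inv_interval (sp S) (rk S ` T)" "en S ` (rk S ` T) = T"
proof -
  have f: "finite S" using S finite_subset by blast
  have TS: "T \<subseteq> S" and ne: "T \<noteq> {}" and nS: "T \<noteq> S" and cv: "conv S T" and cl: "closed S T"
    using g unfolding good_def by auto
  let ?I = "rk S ` T"
  show eT: "en S ` ?I = T"
  proof -
    have "en S ` ?I = (en S \<circ> rk S) ` T" by (simp add: image_comp)
    also have "\<dots> = T" using en_rk[OF f] TS by (auto simp: image_iff) (metis subsetD)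
    finally show ?thesis .
  qed
  have IS: "?I \<subseteq> {1..card S}" using rk_in[OF f] TS by blast
  have fI: "finite ?I" using f TS finite_subset by blast
  have Ine: "?I \<noteq> {}" using ne by simp
  have intv: "?I = {Min ?I..Max ?I}"
  proof
    show "?I \<subseteq> {Min ?I..Max ?I}" using fI by auto
  next
    show "{Min ?I..Max ?I} \<subseteq> ?I"
    proof
      fix j assume j: "j \<in> {Min ?I..Max ?I}"
      have mi: "Min ?I \<in> ?I" "Max ?I \<in> ?I" using fI Ine by auto
      show "j \<in> ?I"
      proof (cases "j = Min ?I \<or> j = Max ?I")
        case True then show ?thesis using mi by auto
      next
        case False
        then have jl: "Min ?I < j" "j < Max ?I" using j by auto
        have jS: "j \<in> {1..card S}" using jl mi IS by fastforce
        obtain x where x: "x \<in> T" "rk S x = Min ?I" using mi by auto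
        obtain z where z: "z \<in> T" "rk S z = Max ?I" using mi by auto
        have "en S (Min ?I) < en S j" "en S j < en S (Max ?I)"
          using en_mono[OF f] jl jS mi IS by blast+
        moreover have "en S (Min ?I) = x"
        proof -
          have "x \<in> S" using x(1) TS by blast
          then have "en S (rk S x) = x" by (rule en_rk[OF f])
          then show ?thesis by (simp only: x(2))
        qed
        moreover have "en S (Max ?I) = z"
        proof -
          have "z \<in> S" using z(1) TS by blast
          then have "en S (rk S z) = z" by (rule en_rk[OF f])
          then show ?thesis by (simp only: z(2))
        qed
        ultimately have "en S j \<in> T" using cv unfolding conv_def
          using x z TS en_in[OF f jS] by blast
        then show ?thesis using rk_en[OF f jS] by (metis imageI)
      qed
    qed
  qed
  have Isub: "?I \<subset> {1..card S}"
  proof -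
    obtain y where y: "y \<in> S" "y \<notin> T" using TS nS by blast
    have "rk S y \<notin> ?I"
    proof
      assume "rk S y \<in> ?I"
      then obtain x where "x \<in> T" "rk S y = rk S x" by auto
      then show False using rk_inj[OF f] y TS by blast
    qed
    then show ?thesis using IS rk_in[OF f y(1)] by blast
  qed
  have inv: "snd (sp S) ` ?I \<subseteq> ?I"
  proof
    fix i assume "i \<in> snd (sp S) ` ?I"
    then obtain x where x: "x \<in> T" "i = snd (sp S) (rk S x)" by auto
    have "i = rk S (beta S x)" using x sp_snd rk_in[OF f] en_rk[OF f] TS by auto
    moreover have "beta S x \<in> T" using cl x(1) unfolding closed_def beta_def by auto
    ultimately show "i \<in> ?I" by simp
  qed
  have "Min ?I \<ge> 1" using IS fI Ine Min_in by fastforce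
  then have "?I = {(Min ?I - 1) + 1..Max ?I}" using intv by simp
  then show "inv_interval (sp S) ?I" unfolding inv_interval_def
    using Ine Isub inv by (metis sp_fst)
qed

lemma conn_iff: "S \<subseteq> U \<Longrightarrow> connected_perm (sp S) \<longleftrightarrow> \<not> (\<exists>T. good S T)"
  unfolding connected_perm_def using inv_good good_inv by blast

definition C :: "nat set \<Rightarrow> perm multiset" where
  "C S = comps_aux (Suc (card S)) (sp S)"

lemma split_facts:
  assumes S: "S \<subseteq> U" and I: "inv_interval (sp S) I"
  shows "restr (sp S) I = sp (en S ` I)" "restr (sp S) ({1..card S} - I) = sp (S - en S ` I)"
    "card (en S ` I) < card S" "card (S - en S ` I) < card S" "en S ` I \<subseteq> U" "S - en S ` I \<subseteq> U"
proof -
  have f: "finite S" using S finite_subset by blast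
  have g: "good S (en S ` I)" and IS: "I \<subseteq> {1..card S}" using inv_good[OF S I] by auto
  show "restr (sp S) I = sp (en S ` I)" using restr_sp_I[OF S IS] .
  show "restr (sp S) ({1..card S} - I) = sp (S - en S ` I)"
    using restr_sp_I[OF S, of "{1..card S} - I"] en_compl[OF f IS] by auto
  show "card (en S ` I) < card S" using g f unfolding good_def by (simp add: psubset_card_mono)
  show "card (S - en S ` I) < card S" using g f unfolding good_def
    by (metis Diff_subset card_Diff_subset card_gt_0_iff diff_less finite_subset psubset_imp_subset subset_empty)
  show "en S ` I \<subseteq> U" "S - en S ` I \<subseteq> U" using g S unfolding good_def by auto
qed

lemma fuel: "S \<subseteq> U \<Longrightarrow> card S < f \<Longrightarrow> comps_aux f (sp S) = C S"
proof (induction f arbitrary: S rule: less_induct)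
  case (less f)
  then obtain g where g: "f = Suc g" by (cases f) auto
  show ?case
  proof (cases "card S = 0 \<or> connected_perm (sp S)")
    case True
    then show ?thesis unfolding C_def g by auto
  next
    case False
    let ?I = "SOME I. inv_interval (sp S) I"
    have "\<exists>I. inv_interval (sp S) I" using False unfolding connected_perm_def by blast
    then have I: "inv_interval (sp S) ?I" by (rule someI_ex)
    note sf = split_facts[OF less.prems(1) I]
    have "comps_aux f (sp S) = comps_aux g (restr (sp S) ?I) + comps_aux g (restr (sp S) ({1..card S} - ?I))"
      unfolding g using False by (simp add: Let_def)
    also have "\<dots> = C (en S ` ?I) + C (S - en S ` ?I)"
      using less.IH[of g] sf less.prems g by auto
    also have "\<dots> = comps_aux (card S) (restr (sp S) ?I) + comps_aux (card S) (restr (sp S) ({1..card S} - ?I))"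
      using less.IH[of "card S"] sf less.prems g by auto
    also have "\<dots> = C S" unfolding C_def using False by (simp add: Let_def)
    finally show ?thesis .
  qed
qed

lemma C_empty: "C {} = {#}" unfolding C_def by simp

lemma C_conn: assumes "S \<subseteq> U" "S \<noteq> {}" "\<not> (\<exists>T. good S T)" shows "C S = {#sp S#}"
proof -
  have f: "finite S" using assms(1) finite_subset by blast
  then have "card S \<noteq> 0" using assms(2) by simp
  moreover have "connected_perm (sp S)" using conn_iff[OF assms(1)] assms(3) by blast
  ultimately show ?thesis unfolding C_def by simp
qed

lemma C_split: assumes S: "S \<subseteq> U" and ex: "\<exists>T. good S T"
  shows "\<exists>T0. good S T0 \<and> C S = C T0 + C (S - T0)"
proof -
  have nc: "\<not> connected_perm (sp S)" using conn_iff[OF S] ex by blast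
  have ne: "card S \<noteq> 0"
  proof
    assume "card S = 0"
    moreover have "finite S" using S finite_subset by blast
    ultimately have "S = {}" by simp
    then show False using ex unfolding good_def by auto
  qed
  let ?I = "SOME I. inv_interval (sp S) I"
  have "\<exists>I. inv_interval (sp S) I" using nc unfolding connected_perm_def by blast
  then have I: "inv_interval (sp S) ?I" by (rule someI_ex)
  note sf = split_facts[OF S I]
  have "C S = comps_aux (card S) (restr (sp S) ?I) + comps_aux (card S) (restr (sp S) ({1..card S} - ?I))"
    unfolding C_def using nc ne by (simp add: Let_def)
  also have "\<dots> = C (en S ` ?I) + C (S - en S ` ?I)" using fuel sf by auto
  finally show ?thesis using inv_good[OF S I] by blast
qed

end

context arcs begin

lemma good_sub_U: "good S T \<Longrightarrow> T \<subseteq> S" unfolding good_def by blast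

lemma good_diff:
  assumes g1: "good S T1" and g2: "good S T2" and ne: "T2 - T1 \<noteq> {}" and ne2: "S - T1 - T2 \<noteq> {}"
  shows "good (S - T1) (T2 - T1)"
proof -
  have T2S: "T2 \<subseteq> S" using g2 unfolding good_def by blast
  have cv: "conv S T2" and cl: "closed S T2" using g2 unfolding good_def by auto
  have "T2 - T1 \<subset> S - T1" using T2S ne2 by blast
  moreover have "conv (S - T1) (T2 - T1)" using cv unfolding conv_def by blast
  moreover have "closed (S - T1) (T2 - T1)" using cl unfolding closed_def by blast
  ultimately show ?thesis unfolding good_def using ne by blast
qed

lemma good_sub:
  assumes g1: "good S T1" and g2: "good S T2" and ne: "T1 \<inter> T2 \<noteq> {}" and ns: "\<not> T1 \<subseteq> T2"
  shows "good T1 (T1 \<inter> T2)"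
proof -
  have T1S: "T1 \<subseteq> S" using g1 unfolding good_def by blast
  have cv: "conv S T2" and cl: "closed S T2" using g2 unfolding good_def by auto
  have "T1 \<inter> T2 \<subset> T1" using ns by blast
  moreover have "conv T1 (T1 \<inter> T2)" using cv T1S unfolding conv_def by blast
  moreover have "closed T1 (T1 \<inter> T2)" using cl T1S unfolding closed_def by blast
  ultimately show ?thesis unfolding good_def using ne by blast
qed

lemma good_card: assumes "S \<subseteq> U" "good S T" shows "card T < card S" "card (S - T) < card S"
proof -
  have f: "finite S" using assms(1) finite_subset by blast
  have T: "T \<noteq> {}" "T \<subset> S" using assms(2) unfolding good_def by auto
  show "card T < card S" using f T by (simp add: psubset_card_mono)
  have "S - T \<subset> S" using T by blast
  then show "card (S - T) < card S" using f by (simp add: psubset_card_mono)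
qed

lemma W: "S \<subseteq> U \<Longrightarrow> good S T \<Longrightarrow> C S = C T + C (S - T)"
proof (induction "card S" arbitrary: S T rule: less_induct)
  case less
  note IH = less.hyps
  have S: "S \<subseteq> U" and g2: "good S T" by fact+
  obtain T1 where g1: "good S T1" and c1: "C S = C T1 + C (S - T1)" using C_split[OF S] g2 by blast
  have T1S: "T1 \<subseteq> S" and T2S: "T \<subseteq> S" using g1 g2 unfolding good_def by auto
  have U1: "T1 \<subseteq> U" "T \<subseteq> U" "S - T1 \<subseteq> U" "S - T \<subseteq> U" using T1S T2S S by auto
  note cd1 = good_card[OF S g1] and cd2 = good_card[OF S g2]
  show ?case
  proof (cases "T1 \<inter> T = {}")
    case True
    show ?thesis
    proof (cases "S - T1 - T = {}")
      case True2: True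
      then have "S - T1 = T" "S - T = T1" using True T1S T2S by auto
      then show ?thesis using c1 by (simp add: add.commute)
    next
      case False
      have e1: "T - T1 = T" "T1 - T = T1" using True by blast+
      have ne0: "T \<noteq> {}" "T1 \<noteq> {}" using g1 g2 unfolding good_def by auto
      have "good (S - T1) (T - T1)" by (rule good_diff[OF g1 g2]) (use e1 ne0 False in auto)
      then have a: "C (S - T1) = C T + C (S - T1 - T)"
        using IH[OF cd1(2) U1(3)] e1 by simp
      have "good (S - T) (T1 - T)" by (rule good_diff[OF g2 g1]) (use e1 ne0 False in auto)
      then have b: "C (S - T) = C T1 + C (S - T - T1)"
        using IH[OF cd2(2) U1(4)] e1 by simp
      have "S - T - T1 = S - T1 - T" by blast
      then show ?thesis using a b c1 by (simp add: ac_simps)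
    qed
  next
    case False
    show ?thesis
    proof (cases "T1 = T")
      case True then show ?thesis using c1 by simp
    next
      case ne: False
      show ?thesis
      proof (cases "T1 \<subseteq> T")
        case True
        then have nn: "\<not> T \<subseteq> T1" using ne by blast
        have e: "T \<inter> T1 = T1" using True by blast
        have "good T (T \<inter> T1)" by (rule good_sub[OF g2 g1]) (use False nn in blast)+
        then have "good T T1" using e by simp
        then have a: "C T = C T1 + C (T - T1)" using IH[OF cd2(1) U1(2)] by simp
        have "S - T1 - T = S - T" using True by blast
        moreover have "S - T \<noteq> {}" using g2 unfolding good_def by blast
        moreover have "T - T1 \<noteq> {}" using nn by blast
        ultimately have "good (S - T1) (T - T1)" using good_diff[OF g1 g2] by simp
        then have b: "C (S - T1) = C (T - T1) + C (S - T)"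
        proof -
          have "S - T1 - (T - T1) = S - T" using True by blast
          then show ?thesis using IH[OF cd1(2) U1(3) \<open>good (S - T1) (T - T1)\<close>] by simp
        qed
        show ?thesis using a b c1 by (simp add: ac_simps)
      next
        case nsub: False
        show ?thesis
        proof (cases "T \<subseteq> T1")
          case True
          have e: "T1 \<inter> T = T" using True by blast
          have "good T1 (T1 \<inter> T)" by (rule good_sub[OF g1 g2]) (use False nsub in blast)+
          then have "good T1 T" using e by simp
          then have a: "C T1 = C T + C (T1 - T)" using IH[OF cd1(1) U1(1)] by simp
          have "S - T - T1 = S - T1" using True by blast
          moreover have "S - T1 \<noteq> {}" using g1 unfolding good_def by blast
          moreover have "T1 - T \<noteq> {}" using nsub ne True by blast
          ultimately have "good (S - T) (T1 - T)" using good_diff[OF g2 g1] by simp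
          then have b: "C (S - T) = C (T1 - T) + C (S - T1)"
          proof -
            have "S - T - (T1 - T) = S - T1" using True by blast
            then show ?thesis using IH[OF cd2(2) U1(4) \<open>good (S - T) (T1 - T)\<close>] by simp
          qed
          show ?thesis using a b c1 by (simp add: ac_simps)
        next
          case nsub2: False
          let ?K = "T1 \<inter> T"
          have e1: "T1 - ?K = T1 - T" "T - (T \<inter> T1) = T - T1" "T \<inter> T1 = ?K" by blast+
          have a1: "C T1 = C ?K + C (T1 - T)"
            using IH[OF cd1(1) U1(1) good_sub[OF g1 g2 False nsub]] e1 by simp
          have "T \<inter> T1 \<noteq> {}" using False by blast
          then have a2: "C T = C ?K + C (T - T1)"
            using IH[OF cd2(1) U1(2) good_sub[OF g2 g1 _ nsub2]] e1 by simp
          show ?thesis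
          proof (cases "S - T1 - T = {}")
            case True
            then have "S - T1 = T - T1" "S - T = T1 - T" using T1S T2S by auto
            then show ?thesis using a1 a2 c1 by (simp add: ac_simps)
          next
            case ne2: False
            have b1: "C (S - T1) = C (T - T1) + C (S - T1 - T)"
            proof -
              have "T - T1 \<noteq> {}" "S - T1 - (T - T1) = S - T1 - T" using nsub2 by blast+
              then show ?thesis using IH[OF cd1(2) U1(3) good_diff[OF g1 g2 _ ne2]] by simp
            qed
            have ne3: "S - T - T1 \<noteq> {}" using ne2 by blast
            have b2: "C (S - T) = C (T1 - T) + C (S - T - T1)"
            proof -
              have "T1 - T \<noteq> {}" "S - T - (T1 - T) = S - T - T1" using nsub by blast+
              then show ?thesis using IH[OF cd2(2) U1(4) good_diff[OF g2 g1 _ ne3]] by simp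
            qed
            have "S - T - T1 = S - T1 - T" by blast
            then show ?thesis using a1 a2 b1 b2 c1 by (simp add: ac_simps)
          qed
        qed
      qed
    qed
  qed
qed

end

definition one1 :: perm where "one1 = (1, \<lambda>i. i)"

context arcs begin

definition full :: "nat set \<Rightarrow> nat set" where "full S = {x\<in>S. B x \<in> S}"

lemma sp_single: assumes "j \<in> U" shows "sp {j} = one1"
proof -
  have Bj: "B j \<noteq> j" using fpf assms by blast
  have e: "en {j} 1 = j" using en_in[of "{j}" 1] by simp
  have "rk {j} j = 1" unfolding rk_def by simp
  then have "(\<lambda>i. if i \<in> {1..card {j}} then rk {j} (beta {j} (en {j} i)) else i) = (\<lambda>i. i)"
    using e Bj unfolding beta_def by (auto simp: fun_eq_iff)
  then show ?thesis unfolding sp_def one1_def std_eq by simp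
qed

lemma no_good_single: "\<not> good {j} T" unfolding good_def by blast

lemma C_single: "j \<in> U \<Longrightarrow> C {j} = {#one1#}"
  using C_conn[of "{j}"] no_good_single sp_single by simp

lemma L1: "S \<subseteq> U \<Longrightarrow> C S = replicate_mset (card (S - full S)) one1 + C (full S)"
proof (induction "card (S - full S)" arbitrary: S)
  case 0
  have "finite S" using 0 finite_subset by blast
  then have "S - full S = {}" using 0 by simp
  then have "full S = S" unfolding full_def by blast
  then show ?case using 0 by simp
next
  case (Suc k)
  have f: "finite S" using Suc finite_subset by blast
  obtain j where j: "j \<in> S - full S" using Suc.hyps(2) by (metis card.empty ex_in_conv nat.distinct(1))
  have jS: "j \<in> S" and Bj: "B j \<notin> S" using j unfolding full_def by auto
  have jU: "j \<in> U" using jS Suc.prems by blast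
  show ?case
  proof (cases "S = {j}")
    case True
    then have "full S = {}" using Bj unfolding full_def by auto
    then show ?thesis using True C_single[OF jU] C_empty by simp
  next
    case False
    have g: "good S {j}" unfolding good_def conv_def closed_def using False jS Bj by auto
    have fe: "full (S - {j}) = full S" unfolding full_def using Bj j unfolding full_def by auto
    have "S - {j} - full (S - {j}) = (S - full S) - {j}" using fe by blast
    then have ck: "card (S - {j} - full (S - {j})) = k" using Suc.hyps(2) j f by simp
    have "C S = C {j} + C (S - {j})" using W[OF Suc.prems g] .
    also have "\<dots> = {#one1#} + replicate_mset k one1 + C (full S)"
    proof -
      have "S - {j} \<subseteq> U" using Suc.prems by blast
      then have "C (S - {j}) = replicate_mset (card (S - {j} - full (S - {j}))) one1 + C (full (S - {j}))"
        using Suc.hyps(1)[OF ck[symmetric]] by blast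
      then have "C (S - {j}) = replicate_mset k one1 + C (full S)" using ck fe by simp
      then show ?thesis using C_single[OF jU] by simp
    qed
    finally show ?thesis by (simp add: Suc.hyps(2)[symmetric])
  qed
qed

lemma C_mem: "S \<subseteq> U \<Longrightarrow> full S = S \<Longrightarrow> a \<in># C S \<Longrightarrow> \<exists>T. T \<subseteq> S \<and> full T = T \<and> a = sp T"
proof (induction "card S" arbitrary: S rule: less_induct)
  case less
  show ?case
  proof (cases "S = {}")
    case True then show ?thesis using less.prems C_empty by simp
  next
    case ne: False
    show ?thesis
    proof (cases "\<exists>T. good S T")
      case False
      then show ?thesis using C_conn[OF less.prems(1) ne] less.prems by auto
    next
      case True
      obtain T0 where g: "good S T0" and c: "C S = C T0 + C (S - T0)" using C_split[OF less.prems(1) True] by blast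
      have T0S: "T0 \<subseteq> S" and cl: "closed S T0" using g unfolding good_def by auto
      have fS: "\<And>x. x \<in> S \<Longrightarrow> B x \<in> S" using less.prems(2) unfolding full_def by blast
      have f1: "full T0 = T0" unfolding full_def using cl fS T0S unfolding closed_def by blast
      have f2: "full (S - T0) = S - T0" unfolding full_def
      proof (rule set_eqI, rule iffI)
        fix x assume "x \<in> {x \<in> S - T0. B x \<in> S - T0}" then show "x \<in> S - T0" by blast
      next
        fix x assume x: "x \<in> S - T0"
        have "B x \<notin> T0"
        proof
          assume "B x \<in> T0" then have "B (B x) \<in> T0" using cl fS T0S x unfolding closed_def by blast
          then show False using x by simp
        qed
        then show "x \<in> {x \<in> S - T0. B x \<in> S - T0}" using x fS by blast
      qed
      note cd = good_card[OF less.prems(1) g]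
      have "a \<in># C T0 \<or> a \<in># C (S - T0)" using less.prems(3) c by simp
      then show ?thesis
      proof
        assume a: "a \<in># C T0"
        have "T0 \<subseteq> U" using T0S less.prems(1) by blast
        then have "\<exists>T. T \<subseteq> T0 \<and> full T = T \<and> a = sp T" using less.hyps[OF cd(1)] f1 a by blast
        then show ?thesis using T0S by blast
      next
        assume a: "a \<in># C (S - T0)"
        have "S - T0 \<subseteq> U" using less.prems(1) by blast
        then have "\<exists>T. T \<subseteq> S - T0 \<and> full T = T \<and> a = sp T" using less.hyps[OF cd(2)] f2 a by blast
        then show ?thesis by blast
      qed
    qed
  qed
qed

lemma fpf_sp: assumes T: "T \<subseteq> U" and fT: "full T = T" shows "fpf_involution (sp T)"
proof -
  have f: "finite T" using T finite_subset by blast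
  let ?p = "snd (sp T)"
  have out: "\<And>x. x \<notin> {1..card T} \<Longrightarrow> ?p x = x"
  proof -
    fix x assume a: "x \<notin> {1..card T}"
    show "?p x = x" unfolding sp_def std_snd using a by (simp only: if_False)
  qed
  have invp: "\<And>x. ?p (?p x) = x"
    by (metis out sp_snd_inv[OF f])
  have bij: "bij_betw ?p {1..card T} {1..card T}"
    by (rule bij_betw_byWitness[where f'="?p"]) (use invp sp_snd_in[OF f] in auto)
  have perm: "?p permutes {1..card T}" using bij_imp_permutes[OF bij out] by blast
  have nf: "\<forall>x\<in>{1..card T}. ?p x \<noteq> x"
  proof
    fix x assume x: "x \<in> {1..card T}"
    let ?y = "en T x"
    have y: "?y \<in> T" using en_in[OF f x] .
    have By: "B ?y \<in> T" using y fT unfolding full_def by blast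
    have px: "?p x = rk T (B ?y)" using sp_snd[OF x] By unfolding beta_def by simp
    show "?p x \<noteq> x"
    proof
      assume "?p x = x"
      then have "rk T (B ?y) = rk T ?y" using px rk_en[OF f x] by simp
      then have "B ?y = ?y" using rk_inj[OF f By y] by simp
      then show False using fpf y T by blast
    qed
  qed
  show ?thesis unfolding fpf_involution_def is_perm_def using perm invp nf by simp
qed

end

lemma in_rotclass: "a \<in> rotclass a"
  unfolding rotclass_def by (rule CollectI, rule exI[of _ 0]) simp

definition ins1 :: "'a \<Rightarrow> 'a set option \<Rightarrow> 'a set set \<Rightarrow> 'a set set" where
  "ins1 c x Q = (case x of None \<Rightarrow> insert {c} Q | Some L \<Rightarrow> insert (insert c L) (Q - {L}))"

definition rem1 :: "'a \<Rightarrow> 'a set set \<Rightarrow> 'a set set" where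
  "rem1 c P = (\<inter>) (- {c}) ` P - {{}}"

definition opts :: "'a set set \<Rightarrow> 'a set option set" where
  "opts Q = insert None (Some ` Q)"

definition sb :: "'a set set \<Rightarrow> 'a \<Rightarrow> 'a \<Rightarrow> bool" where
  "sb P x y \<longleftrightarrow> (\<exists>L\<in>P. x \<in> L \<and> y \<in> L)"

lemma part_uniq: "partition_on A P \<Longrightarrow> L \<in> P \<Longrightarrow> M \<in> P \<Longrightarrow> x \<in> L \<Longrightarrow> x \<in> M \<Longrightarrow> L = M"
  unfolding partition_on_def disjoint_def by blast

lemma ins1_None: "ins1 c None Q = insert {c} Q" unfolding ins1_def by simp
lemma ins1_Some: "ins1 c (Some L) Q = insert (insert c L) (Q - {L})" unfolding ins1_def by simp

lemma opts_cases: "x \<in> opts Q \<Longrightarrow> x = None \<or> (\<exists>L. x = Some L \<and> L \<in> Q)"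
  unfolding opts_def by auto

lemma ins1_part:
  assumes P: "partition_on V Q" and c: "c \<notin> V" and x: "x \<in> opts Q"
  shows "partition_on (insert c V) (ins1 c x Q)"
proof -
  have U: "\<Union>Q = V" and d: "disjoint Q" and e: "{} \<notin> Q" using P unfolding partition_on_def by auto
  from opts_cases[OF x] show ?thesis
  proof
    assume N: "x = None"
    show ?thesis unfolding N ins1_None partition_on_def using U d e c
      unfolding disjoint_def by auto
  next
    assume "\<exists>L. x = Some L \<and> L \<in> Q"
    then obtain L where L: "x = Some L" "L \<in> Q" by blast
    show ?thesis unfolding L(1) ins1_Some partition_on_def
    proof (intro conjI)
      show "\<Union>(insert (insert c L) (Q - {L})) = insert c V" using U L(2) by auto
      show "{} \<notin> insert (insert c L) (Q - {L})" using e by auto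
      show "disjoint (insert (insert c L) (Q - {L}))" unfolding disjoint_def
      proof (intro ballI impI)
        fix p q assume pq: "p \<in> insert (insert c L) (Q - {L})" "q \<in> insert (insert c L) (Q - {L})" "p \<noteq> q"
        have cq: "\<And>M. M \<in> Q \<Longrightarrow> c \<notin> M" using U c by blast
        have dL: "\<And>M. M \<in> Q \<Longrightarrow> M \<noteq> L \<Longrightarrow> M \<inter> L = {}" using d L(2) unfolding disjoint_def by blast
        show "p \<inter> q = {}"
        proof (cases "p = insert c L")
          case True
          then have "q \<in> Q - {L}" using pq by auto
          then show ?thesis using True cq dL by blast
        next
          case False
          then have p: "p \<in> Q - {L}" using pq by auto
          show ?thesis
          proof (cases "q = insert c L")
            case True then show ?thesis using p cq dL by blast
          next
            case False
            then have "q \<in> Q - {L}" using pq by auto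
            then show ?thesis using p d pq(3) unfolding disjoint_def by blast
          qed
        qed
      qed
    qed
  qed
qed

lemma ins1_card:
  assumes f: "finite Q" and c: "c \<notin> \<Union>Q" and x: "x \<in> opts Q"
  shows "card (ins1 c x Q) = card Q + (if x = None then 1 else 0)"
proof -
  from opts_cases[OF x] show ?thesis
  proof
    assume N: "x = None"
    have "{c} \<notin> Q" using c by blast
    then show ?thesis unfolding N ins1_None using f by simp
  next
    assume "\<exists>L. x = Some L \<and> L \<in> Q"
    then obtain L where L: "x = Some L" "L \<in> Q" by blast
    have "insert c L \<notin> Q - {L}" using c by blast
    then have "card (ins1 c x Q) = Suc (card (Q - {L}))" unfolding L(1) ins1_Some using f by simp
    also have "\<dots> = card Q" using f L(2) card_Diff1_less[OF f L(2)] by (simp add: card_Diff_singleton)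
    finally show ?thesis using L by simp
  qed
qed

lemma rem1_ins1:
  assumes c: "c \<notin> \<Union>Q" and e: "{} \<notin> Q" and x: "x \<in> opts Q"
  shows "rem1 c (ins1 c x Q) = Q"
proof -
  have keep: "\<And>M. M \<in> Q \<Longrightarrow> - {c} \<inter> M = M" using c by blast
  have imQ: "(\<inter>) (- {c}) ` Q = Q"
  proof -
    have "(\<inter>) (- {c}) ` Q = (\<lambda>M. M) ` Q" by (rule image_cong) (use keep in auto)
    then show ?thesis by simp
  qed
  from opts_cases[OF x] show ?thesis
  proof
    assume N: "x = None"
    have "(\<inter>) (- {c}) ` insert {c} Q = insert {} Q" using imQ by auto
    then show ?thesis unfolding rem1_def N ins1_None using e by auto
  next
    assume "\<exists>L. x = Some L \<and> L \<in> Q"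
    then obtain L where L: "x = Some L" "L \<in> Q" by blast
    have "- {c} \<inter> insert c L = L" using keep[OF L(2)] by blast
    then have "(\<inter>) (- {c}) ` insert (insert c L) (Q - {L}) = insert L ((\<inter>) (- {c}) ` (Q - {L}))" by simp
    also have "(\<inter>) (- {c}) ` (Q - {L}) = Q - {L}"
    proof -
      have "(\<inter>) (- {c}) ` (Q - {L}) = (\<lambda>M. M) ` (Q - {L})" by (rule image_cong) (use keep in auto)
      then show ?thesis by simp
    qed
    finally show ?thesis unfolding rem1_def L(1) ins1_Some using e L(2) by auto
  qed
qed

lemma ins1_block_c:
  assumes c: "c \<notin> \<Union>Q" and M: "M \<in> ins1 c x Q" "c \<in> M"
  shows "(x = None \<and> M = {c}) \<or> (\<exists>L. x = Some L \<and> M = insert c L)"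
  using assms unfolding ins1_def by (cases x) auto

lemma ins1_block_nc:
  assumes M: "M \<in> ins1 c x Q" "c \<notin> M"
  shows "M \<in> Q \<and> (\<forall>L. x = Some L \<longrightarrow> M \<noteq> L)"
  using assms unfolding ins1_def by (cases x) auto

lemma ins1_inj_aux:
  assumes c: "c \<notin> \<Union>Q" and e: "{} \<notin> Q" and L: "L \<in> Q"
  shows "ins1 c None Q \<noteq> ins1 c (Some L) Q"
proof
  assume eq: "ins1 c None Q = ins1 c (Some L) Q"
  have "{c} \<in> ins1 c None Q" unfolding ins1_None by simp
  then have "{c} \<in> insert (insert c L) (Q - {L})" using eq unfolding ins1_Some by simp
  then have "{c} = insert c L \<or> {c} \<in> Q" by blast
  then show False
  proof
    assume a: "{c} = insert c L"
    have "c \<notin> L" using c L by blast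
    then have "L = {}" using a by blast
    then show False using e L by simp
  next
    assume "{c} \<in> Q" then show False using c by blast
  qed
qed

lemma ins1_inj:
  assumes c: "c \<notin> \<Union>Q" and e: "{} \<notin> Q" and x: "x \<in> opts Q" and x': "x' \<in> opts Q"
    and eq: "ins1 c x Q = ins1 c x' Q"
  shows "x = x'"
proof (cases x)
  case None
  show ?thesis
  proof (cases x')
    case None then show ?thesis using \<open>x = None\<close> by simp
  next
    case (Some L)
    then have "L \<in> Q" using x' unfolding opts_def by auto
    then show ?thesis using ins1_inj_aux[OF c e] eq None Some by metis
  qed
next
  case (Some L)
  then have L: "L \<in> Q" using x unfolding opts_def by auto
  show ?thesis
  proof (cases x')
    case None then show ?thesis using ins1_inj_aux[OF c e L] eq Some by metis
  next
    case (Some L')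
    then have L': "L' \<in> Q" using x' unfolding opts_def by auto
    have "insert c L \<in> ins1 c x Q" unfolding \<open>x = Some L\<close> ins1_Some by simp
    then have "insert c L \<in> insert (insert c L') (Q - {L'})" using eq unfolding Some ins1_Some by simp
    then have "insert c L = insert c L' \<or> insert c L \<in> Q" by blast
    moreover have "insert c L \<notin> Q" using c by blast
    ultimately have "insert c L = insert c L'" by blast
    moreover have "c \<notin> L" "c \<notin> L'" using L L' c by blast+
    ultimately have "L = L'" by (metis Diff_insert_absorb)
    then show ?thesis using \<open>x = Some L\<close> Some by simp
  qed
qed

lemma rem1_part: "partition_on V P \<Longrightarrow> partition_on (V - {c}) (rem1 c P)"
  unfolding rem1_def using partition_on_restrict[of V P "- {c}"] by (simp add: Diff_eq Int_commute)

lemma ins1_surj: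
  assumes P: "partition_on (insert c V) P" and c: "c \<notin> V"
  shows "\<exists>x\<in>opts (rem1 c P). P = ins1 c x (rem1 c P)"
proof -
  have U: "\<Union>P = insert c V" and e: "{} \<notin> P" using P unfolding partition_on_def by auto
  obtain Lc where Lc: "Lc \<in> P" "c \<in> Lc" using U by blast
  have oth: "\<And>M. M \<in> P \<Longrightarrow> M \<noteq> Lc \<Longrightarrow> c \<notin> M" using part_uniq[OF P] Lc by blast
  have im: "(\<inter>) (- {c}) ` P = insert (Lc - {c}) (P - {Lc})"
  proof -
    have "(\<inter>) (- {c}) ` P = (\<inter>) (- {c}) ` insert Lc (P - {Lc})" using Lc by (simp add: insert_absorb)
    also have "\<dots> = insert (Lc - {c}) ((\<inter>) (- {c}) ` (P - {Lc}))" by (simp add: Diff_eq Int_commute)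
    also have "(\<inter>) (- {c}) ` (P - {Lc}) = P - {Lc}"
    proof -
      have "\<And>M. M \<in> P - {Lc} \<Longrightarrow> - {c} \<inter> M = M" using oth by blast
      then have "(\<inter>) (- {c}) ` (P - {Lc}) = (\<lambda>M. M) ` (P - {Lc})" by (rule image_cong[OF refl])
      then show ?thesis by simp
    qed
    finally show ?thesis .
  qed
  have ePL: "{} \<notin> P - {Lc}" using e by blast
  show ?thesis
  proof (cases "Lc = {c}")
    case True
    then have r: "rem1 c P = P - {Lc}" unfolding rem1_def im using ePL by auto
    have "P = ins1 c None (rem1 c P)" unfolding r ins1_None using True Lc by auto
    then show ?thesis unfolding opts_def by blast
  next
    case False
    then have ne: "Lc - {c} \<noteq> {}" using Lc by blast
    have nin: "Lc - {c} \<notin> P - {Lc}"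
    proof
      assume a: "Lc - {c} \<in> P - {Lc}"
      obtain y where y: "y \<in> Lc - {c}" using ne by blast
      then have "Lc - {c} = Lc" using part_uniq[OF P, of "Lc - {c}" Lc y] a Lc by blast
      then show False using Lc by blast
    qed
    have r: "rem1 c P = insert (Lc - {c}) (P - {Lc})" unfolding rem1_def im using ePL ne by auto
    have "ins1 c (Some (Lc - {c})) (rem1 c P) = insert Lc (P - {Lc})"
      unfolding r ins1_Some using nin Lc by (simp add: insert_absorb)
    also have "\<dots> = P" using Lc by (simp add: insert_absorb)
    finally have "P = ins1 c (Some (Lc - {c})) (rem1 c P)" by simp
    moreover have "Some (Lc - {c}) \<in> opts (rem1 c P)" unfolding opts_def r by simp
    ultimately show ?thesis by blast
  qed
qed

lemma sb_ins1: assumes "sb Q z w" shows "sb (ins1 c x Q) z w"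
proof -
  obtain L where L: "L \<in> Q" "z \<in> L" "w \<in> L" using assms unfolding sb_def by blast
  show ?thesis
  proof (cases x)
    case None
    then have "L \<in> ins1 c x Q" using L unfolding None ins1_None by simp
    then show ?thesis using L unfolding sb_def by blast
  next
    case (Some M)
    show ?thesis
    proof (cases "L = M")
      case True
      then have "insert c L \<in> ins1 c x Q" unfolding Some ins1_Some by simp
      then show ?thesis using L unfolding sb_def by blast
    next
      case False
      then have "L \<in> ins1 c x Q" using L unfolding Some ins1_Some by simp
      then show ?thesis using L unfolding sb_def by blast
    qed
  qed
qed

lemma sb_rem1: assumes "sb P z w" "z \<noteq> c" "w \<noteq> c" shows "sb (rem1 c P) z w"
proof -
  obtain L where L: "L \<in> P" "z \<in> L" "w \<in> L" using assms unfolding sb_def by blast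
  have zw: "z \<in> - {c} \<inter> L" "w \<in> - {c} \<inter> L" using L assms by auto
  have "- {c} \<inter> L \<in> (\<inter>) (- {c}) ` P" using L(1) by blast
  moreover have "- {c} \<inter> L \<noteq> {}" using zw by blast
  ultimately have m: "- {c} \<inter> L \<in> rem1 c P" unfolding rem1_def by (simp only: Diff_iff singleton_iff simp_thms)
  show ?thesis unfolding sb_def
  proof (rule bexI[of _ "- {c} \<inter> L"])
    show "z \<in> - {c} \<inter> L \<and> w \<in> - {c} \<inter> L" using zw by (rule conjI)
    show "- {c} \<inter> L \<in> rem1 c P" by (rule m)
  qed
qed

definition InsP :: "'a \<Rightarrow> 'a \<Rightarrow> 'a set set \<Rightarrow> 'a set option \<times> 'a set option \<Rightarrow> 'a set set" where
  "InsP a b P' oo = ins1 b (snd oo) (ins1 a (fst oo) P')"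

definition OP :: "'a set set \<Rightarrow> ('a set option \<times> 'a set option) set" where
  "OP P' = Sigma (opts P') (\<lambda>x. {y\<in>opts P'. x = y \<longrightarrow> x = None})"

locale twopt =
  fixes V :: "'a set" and P' :: "'a set set" and a b :: 'a
  assumes part: "partition_on V P'" and aV: "a \<notin> V" and bV: "b \<notin> V" and ab: "a \<noteq> b"
begin

lemma UP: "\<Union>P' = V" and eP: "{} \<notin> P'" using part unfolding partition_on_def by auto

lemma OP_mem: "(x, y) \<in> OP P' \<longleftrightarrow> x \<in> opts P' \<and> y \<in> opts P' \<and> (x = y \<longrightarrow> x = None)"
  unfolding OP_def by simp

lemma Q1_part: "x \<in> opts P' \<Longrightarrow> partition_on (insert a V) (ins1 a x P')"
  using ins1_part[OF part aV] by blast

lemma y_opts: assumes "(x, y) \<in> OP P'" shows "y \<in> opts (ins1 a x P')"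
proof -
  have x: "x \<in> opts P'" and y: "y \<in> opts P'" and d: "x = y \<longrightarrow> x = None" using assms OP_mem by auto
  show ?thesis
  proof (cases y)
    case None then show ?thesis unfolding opts_def by simp
  next
    case (Some L2)
    then have L2: "L2 \<in> P'" using y unfolding opts_def by auto
    have "L2 \<in> ins1 a x P'"
    proof (cases x)
      case None then show ?thesis using L2 unfolding None ins1_None by simp
    next
      case (Some L)
      then have "L2 \<noteq> L" using d \<open>y = Some L2\<close> by auto
      then show ?thesis using L2 unfolding Some ins1_Some by simp
    qed
    then show ?thesis unfolding opts_def Some by simp
  qed
qed

lemma Ins_part: assumes "(x, y) \<in> OP P'" shows "partition_on (insert b (insert a V)) (InsP a b P' (x, y))"
proof -
  have x: "x \<in> opts P'" using assms OP_mem by auto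
  have "b \<notin> insert a V" using bV ab by simp
  then show ?thesis unfolding InsP_def using ins1_part[OF Q1_part[OF x] _ y_opts[OF assms]] by simp
qed

lemma b_notin_Q1: assumes x: "x \<in> opts P'" shows "b \<notin> \<Union>(ins1 a x P')"
proof -
  have "\<Union>(ins1 a x P') = insert a V" using partition_onD1[OF Q1_part[OF x]] by simp
  then show ?thesis using bV ab by simp
qed

lemma e_Q1: "x \<in> opts P' \<Longrightarrow> {} \<notin> ins1 a x P'"
  using partition_onD3[OF Q1_part] by blast

lemma Ins_rem: assumes "(x, y) \<in> OP P'" shows "rem1 a (rem1 b (InsP a b P' (x, y))) = P'"
proof -
  have x: "x \<in> opts P'" using assms OP_mem by auto
  have "rem1 b (InsP a b P' (x, y)) = ins1 a x P'"
    unfolding InsP_def using rem1_ins1[OF b_notin_Q1[OF x] e_Q1[OF x] y_opts[OF assms]] by simp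
  moreover have "a \<notin> \<Union>P'" using UP aV by simp
  ultimately show ?thesis using rem1_ins1[OF _ eP x] by simp
qed

lemma Ins_nsb: assumes "(x, y) \<in> OP P'" shows "\<not> sb (InsP a b P' (x, y)) a b"
proof
  assume "sb (InsP a b P' (x, y)) a b"
  then obtain M where M: "M \<in> ins1 b y (ins1 a x P')" "a \<in> M" "b \<in> M" unfolding sb_def InsP_def by auto
  have x: "x \<in> opts P'" and y: "y \<in> opts P'" using assms OP_mem by auto
  from ins1_block_c[OF b_notin_Q1[OF x] M(1) M(3)]
  show False
  proof
    assume "y = None \<and> M = {b}" then show False using M(2) ab by simp
  next
    assume "\<exists>L. y = Some L \<and> M = insert b L"
    then obtain L where L: "y = Some L" "M = insert b L" by blast
    then have "L \<in> P'" using y unfolding opts_def by auto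
    then have "a \<notin> L" using UP aV by blast
    then show False using M(2) L ab by simp
  qed
qed

lemma Ins_sb: assumes "(x, y) \<in> OP P'" "sb P' z w" shows "sb (InsP a b P' (x, y)) z w"
  unfolding InsP_def by (rule sb_ins1, rule sb_ins1, rule assms(2))

lemma Ins_inj: "inj_on (InsP a b P') (OP P')"
proof (rule inj_onI)
  fix o1 o2 assume o1: "o1 \<in> OP P'" and o2: "o2 \<in> OP P'" and eq: "InsP a b P' o1 = InsP a b P' o2"
  obtain x1 y1 where p1: "o1 = (x1, y1)" by (cases o1)
  obtain x2 y2 where p2: "o2 = (x2, y2)" by (cases o2)
  have x1: "x1 \<in> opts P'" and x2: "x2 \<in> opts P'" using o1 o2 p1 p2 OP_mem by auto
  have "rem1 b (InsP a b P' o1) = ins1 a x1 P'"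
    unfolding InsP_def p1 using rem1_ins1[OF b_notin_Q1[OF x1] e_Q1[OF x1] y_opts] o1 p1 by simp
  moreover have "rem1 b (InsP a b P' o2) = ins1 a x2 P'"
    unfolding InsP_def p2 using rem1_ins1[OF b_notin_Q1[OF x2] e_Q1[OF x2] y_opts] o2 p2 by simp
  ultimately have q: "ins1 a x1 P' = ins1 a x2 P'" using eq by simp
  have "a \<notin> \<Union>P'" using UP aV by simp
  then have xx: "x1 = x2" using ins1_inj[OF _ eP x1 x2 q] by simp
  have yo1: "y1 \<in> opts (ins1 a x1 P')" using y_opts o1 p1 by simp
  have yo2: "y2 \<in> opts (ins1 a x1 P')" using y_opts o2 p2 xx by simp
  have "ins1 b y1 (ins1 a x1 P') = ins1 b y2 (ins1 a x1 P')" using eq xx unfolding p1 p2 InsP_def by simp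
  then have "y1 = y2" using ins1_inj[OF b_notin_Q1[OF x1] e_Q1[OF x1] yo1 yo2] by simp
  then show "o1 = o2" using xx p1 p2 by simp
qed

lemma Ins_surj:
  assumes P: "partition_on (insert b (insert a V)) P" and ns: "\<not> sb P a b"
    and r: "rem1 a (rem1 b P) = P'"
  shows "\<exists>oo\<in>OP P'. P = InsP a b P' oo"
proof -
  have bn: "b \<notin> insert a V" using bV ab by simp
  obtain y where y: "y \<in> opts (rem1 b P)" and Py: "P = ins1 b y (rem1 b P)"
    using ins1_surj[OF P bn] by blast
  have "insert b (insert a V) - {b} = insert a V" using bV ab by auto
  then have Q1p: "partition_on (insert a V) (rem1 b P)"
    using rem1_part[OF P, of b] by simp
  obtain x where x: "x \<in> opts P'" and Qx: "rem1 b P = ins1 a x P'"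
    using ins1_surj[OF Q1p aV] r by auto
  have "(x, y) \<in> OP P'"
  proof -
    have "y \<in> opts P' \<and> (x = y \<longrightarrow> x = None)"
    proof (cases y)
      case None then show ?thesis unfolding opts_def by simp
    next
      case (Some L2)
      then have L2: "L2 \<in> ins1 a x P'" using y Qx unfolding opts_def by auto
      have h: "insert b L2 \<in> ins1 b y (rem1 b P)" unfolding Some ins1_Some by simp
      have "insert b L2 \<in> P" by (rule ssubst[OF Py, where P="\<lambda>Z. insert b L2 \<in> Z"]) (rule h)
      then have "a \<notin> L2" using ns unfolding sb_def by blast
      then have "L2 \<in> P' \<and> (\<forall>L. x = Some L \<longrightarrow> L2 \<noteq> L)" using ins1_block_nc[OF L2] by blast
      then show ?thesis using Some unfolding opts_def by auto
    qed
    then show ?thesis using x OP_mem by simp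
  qed
  moreover have "P = InsP a b P' (x, y)"
  proof -
    have "P = ins1 b y (rem1 b P)" by (rule Py)
    also have "\<dots> = ins1 b y (ins1 a x P')" using Qx by simp
    finally show ?thesis unfolding InsP_def by simp
  qed
  ultimately show ?thesis by blast
qed

lemma Ins_card: assumes oo: "(x, y) \<in> OP P'" and f: "finite P'"
  shows "card (InsP a b P' (x, y)) = card P' + (if x = None then 1 else 0) + (if y = None then 1 else 0)"
proof -
  have x: "x \<in> opts P'" using oo OP_mem by auto
  have "a \<notin> \<Union>P'" using UP aV by simp
  then have c1: "card (ins1 a x P') = card P' + (if x = None then 1 else 0)" using ins1_card[OF f _ x] by simp
  have f1: "finite (ins1 a x P')" using f unfolding ins1_def by (cases x) auto
  show ?thesis unfolding InsP_def using ins1_card[OF f1 b_notin_Q1[OF x] y_opts[OF oo]] c1 by simp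
qed

end

definition mu :: "nat \<Rightarrow> int" where "mu k = (-1) ^ (k - 1) * int (fact (k - 1))"

lemma mu_identity: assumes "r \<ge> 1"
  shows "mu (r + 2) + 2 * int r * mu (r + 1) + int r * (int r - 1) * mu r = 0"
proof -
  obtain s where s: "r = s + 1" using assms by (metis add.commute le_add_diff_inverse)
  have m1: "mu r = (-1) ^ s * int (fact s)" unfolding mu_def s by simp
  have m2: "mu (r + 1) = - ((-1) ^ s * int (fact s) * (int s + 1))" unfolding mu_def s
    by (simp add: fact_Suc algebra_simps)
  have m3: "mu (r + 2) = (-1) ^ s * int (fact s) * (int s + 1) * (int s + 2)" unfolding mu_def s
    by (simp add: fact_Suc algebra_simps numeral_2_eq_2)
  show ?thesis unfolding m1 m2 m3 unfolding s by (simp add: algebra_simps)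
qed

lemma sum_OP:
  assumes f: "finite P'" and r: "card P' \<ge> 1"
  shows "(\<Sum>oo\<in>OP P'. mu (card P' + (if fst oo = None then 1 else 0) + (if snd oo = None then 1 else 0))) = 0"
proof -
  let ?r = "card P'"
  let ?phi = "\<lambda>x y. mu (?r + (if x = None then 1 else 0) + (if y = None then 1 else 0))"
  have fo: "finite (opts P')" unfolding opts_def using f by simp
  have "(\<Sum>oo\<in>OP P'. ?phi (fst oo) (snd oo)) = (\<Sum>(x,y)\<in>OP P'. ?phi x y)" by (simp add: split_beta)
  also have "\<dots> = (\<Sum>x\<in>opts P'. \<Sum>y\<in>{y\<in>opts P'. x = y \<longrightarrow> x = None}. ?phi x y)"
    unfolding OP_def by (rule sum.Sigma[symmetric]) (use fo in auto)
  also have "\<dots> = (\<Sum>x\<in>opts P'. if x = None then mu (?r + 2) + int ?r * mu (?r + 1) else mu (?r + 1) + (int ?r - 1) * mu ?r)"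
  proof (rule sum.cong[OF refl])
    fix x assume x: "x \<in> opts P'"
    have nS: "None \<notin> Some ` P'" by auto
    show "(\<Sum>y\<in>{y\<in>opts P'. x = y \<longrightarrow> x = None}. ?phi x y) = (if x = None then mu (?r + 2) + int ?r * mu (?r + 1) else mu (?r + 1) + (int ?r - 1) * mu ?r)"
    proof (cases x)
      case None
      have "{y\<in>opts P'. x = y \<longrightarrow> x = None} = insert None (Some ` P')" using None unfolding opts_def by auto
      then have "(\<Sum>y\<in>{y\<in>opts P'. x = y \<longrightarrow> x = None}. ?phi x y) = ?phi x None + (\<Sum>y\<in>Some ` P'. ?phi x y)"
        using nS f by simp
      also have "(\<Sum>y\<in>Some ` P'. ?phi x y) = (\<Sum>L\<in>P'. ?phi x (Some L))" by (simp add: sum.reindex)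
      also have "\<dots> = int ?r * mu (?r + 1)" using None by simp
      finally show ?thesis using None by (simp add: numeral_2_eq_2)
    next
      case (Some L)
      then have L: "L \<in> P'" using x unfolding opts_def by auto
      have "{y\<in>opts P'. x = y \<longrightarrow> x = None} = insert None (Some ` (P' - {L}))" using Some unfolding opts_def by auto
      then have "(\<Sum>y\<in>{y\<in>opts P'. x = y \<longrightarrow> x = None}. ?phi x y) = ?phi x None + (\<Sum>y\<in>Some ` (P' - {L}). ?phi x y)"
        using f by simp
      also have "(\<Sum>y\<in>Some ` (P' - {L}). ?phi x y) = (\<Sum>L'\<in>P' - {L}. ?phi x (Some L'))" by (simp add: sum.reindex)
      also have "\<dots> = int (card (P' - {L})) * mu ?r" using Some by simp
      also have "int (card (P' - {L})) = int ?r - 1" using L f r by (simp add: of_nat_diff)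
      finally show ?thesis using Some by simp
    qed
  qed
  also have "\<dots> = (mu (?r + 2) + int ?r * mu (?r + 1)) + (\<Sum>L\<in>P'. mu (?r + 1) + (int ?r - 1) * mu ?r)"
  proof -
    have nS: "None \<notin> Some ` P'" by auto
    show ?thesis unfolding opts_def using nS f by (simp add: sum.reindex)
  qed
  also have "\<dots> = mu (?r + 2) + 2 * int ?r * mu (?r + 1) + int ?r * (int ?r - 1) * mu ?r"
    by (simp add: algebra_simps)
  also have "\<dots> = 0" using mu_identity[OF r] .
  finally show ?thesis .
qed

definition XX :: "perm set" where "XX = rotclass one1"

lemma mem_sum_mset: "finite A \<Longrightarrow> c \<in># (\<Sum>x\<in>A. f x) \<Longrightarrow> \<exists>x\<in>A. c \<in># f x"
proof (induction A rule: finite_induct)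
  case empty then show ?case by simp
next
  case (insert y A) then show ?case by auto
qed

lemma sb_sym: "sb P x y \<Longrightarrow> sb P y x" unfolding sb_def by blast

context arcs begin

definition br :: "nat set \<Rightarrow> perm set multiset" where "br L = bracket (sp L)"
definition G :: "nat set set \<Rightarrow> perm set multiset" where "G P = (\<Sum>L\<in>P. br L)"
definition nosplit :: "nat set set \<Rightarrow> bool" where "nosplit P \<longleftrightarrow> (\<forall>x\<in>U. sb P x (B x))"

lemma br_C: "br L = image_mset rotclass (C L)" unfolding br_def bracket_def comps_def C_def by simp

lemma br_L1: "L \<subseteq> U \<Longrightarrow> br L = replicate_mset (card (L - full L)) XX + br (full L)"
  using L1[of L] unfolding br_C XX_def by simp

lemma br_empty: "br {} = {#}" unfolding br_C using C_empty by simp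

lemma full_insert: assumes "c \<notin> L" "B c \<notin> L" "c \<in> U" shows "full (insert c L) = full L"
proof -
  have "B c \<noteq> c" using fpf assms(3) by blast
  moreover have "\<And>x. x \<in> L \<Longrightarrow> B x \<noteq> c" using assms(2) by (metis BB)
  ultimately show ?thesis unfolding full_def using assms by auto
qed

lemma br_insert: assumes LU: "insert c L \<subseteq> U" and c: "c \<notin> L" "B c \<notin> L"
  shows "br (insert c L) = add_mset XX (br L)"
proof -
  have LU': "L \<subseteq> U" using LU by blast
  then have f: "finite L" by (rule finite_subset) simp
  have cU: "c \<in> U" using LU by blast
  have fe: "full (insert c L) = full L" by (rule full_insert[OF c cU])
  have fL: "full L \<subseteq> L" unfolding full_def by blast
  have "insert c L - full L = insert c (L - full L)" using c fL by blast
  then have "card (insert c L - full (insert c L)) = Suc (card (L - full L))" using fe f c by simp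
  then have "br (insert c L) = replicate_mset (Suc (card (L - full L))) XX + br (full L)"
    using br_L1[OF LU] fe by simp
  also have "\<dots> = add_mset XX (replicate_mset (card (L - full L)) XX + br (full L))" by simp
  also have "replicate_mset (card (L - full L)) XX + br (full L) = br L"
    by (rule br_L1[symmetric]) (use LU in blast)
  finally show ?thesis .
qed

lemma G_ins1:
  assumes f: "finite Q" and QU: "\<forall>L\<in>Q. L \<subseteq> U" and c: "c \<in> U" "c \<notin> \<Union>Q" and x: "x \<in> opts Q"
    and nb: "\<forall>L. x = Some L \<longrightarrow> B c \<notin> L"
  shows "G (ins1 c x Q) = add_mset XX (G Q)"
proof (cases x)
  case None
  have "{c} \<notin> Q" using c by blast
  then have "G (ins1 c x Q) = br {c} + G Q" unfolding None ins1_None G_def using f by simp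
  moreover have "br {c} = add_mset XX (br {})" using br_insert[of c "{}"] c by simp
  ultimately show ?thesis using br_empty by simp
next
  case (Some L)
  have L: "L \<in> Q" using x Some unfolding opts_def by auto
  have nin: "insert c L \<notin> Q - {L}" using c by blast
  have "G (ins1 c x Q) = br (insert c L) + G (Q - {L})" unfolding Some ins1_Some G_def using f nin by simp
  moreover have "G Q = br L + G (Q - {L})" unfolding G_def using f L by (simp add: sum.remove)
  moreover have "br (insert c L) = add_mset XX (br L)"
    using br_insert[of c L] c QU L nb Some by blast
  ultimately show ?thesis by simp
qed

end

context arcs begin

definition F :: "perm set multiset \<Rightarrow> nat set set \<Rightarrow> int" where
  "F N P = mu (card P) * (if G P = N then 1 else 0)"

definition fs :: "nat set set \<Rightarrow> nat" where
  "fs P = (LEAST x. x \<in> U \<and> \<not> sb P x (B x))"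

lemma fs_props:
  assumes "\<not> nosplit P"
  shows "fs P \<in> U" "\<not> sb P (fs P) (B (fs P))" "\<And>z. z \<in> U \<Longrightarrow> z < fs P \<Longrightarrow> sb P z (B z)"
proof -
  have ex: "\<exists>x. x \<in> U \<and> \<not> sb P x (B x)" using assms unfolding nosplit_def by blast
  show "fs P \<in> U" "\<not> sb P (fs P) (B (fs P))" unfolding fs_def using LeastI_ex[OF ex] by auto
  show "\<And>z. z \<in> U \<Longrightarrow> z < fs P \<Longrightarrow> sb P z (B z)" unfolding fs_def using not_less_Least by blast
qed

lemma finite_parts: "finite {P. partition_on U P}"
  by (rule finitely_many_partition_on) simp

lemma fiber_zero:
  assumes P1: "partition_on U P1" and ns1: "\<not> nosplit P1" and a: "fs P1 = a"
  shows "(\<Sum>P\<in>{P \<in> {P \<in> {P. partition_on U P} - {P. nosplit P}. fs P = a}. rem1 a (rem1 (B a) P) = rem1 a (rem1 (B a) P1)}. F N P) = 0"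
proof -
  define b where "b = B a"
  define P' where "P' = rem1 a (rem1 b P1)"
  define V where "V = U - {a, b}"
  have aU: "a \<in> U" and nsb1: "\<not> sb P1 a b" and lt1: "\<And>z. z \<in> U \<Longrightarrow> z < a \<Longrightarrow> sb P1 z (B z)"
    using fs_props[OF ns1] a b_def by auto
  have bU: "b \<in> U" using BU[OF aU] b_def by simp
  have "B a \<noteq> a" using fpf aU by blast
  then have ab: "a \<noteq> b" unfolding b_def by simp
  have Bb: "B b = a" using b_def by simp
  have VU: "insert b (insert a V) = U" using aU bU unfolding V_def by auto
  have p1: "partition_on (U - {b}) (rem1 b P1)" by (rule rem1_part[OF P1])
  have "U - {b} - {a} = V" unfolding V_def by auto
  then have partP': "partition_on V P'" using rem1_part[OF p1, of a] unfolding P'_def by simp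
  interpret tp: twopt V P' a b
    by (unfold_locales) (use partP' ab in \<open>auto simp: V_def\<close>)
  have fV: "finite V" unfolding V_def by simp
  have fP': "finite P'" using finite_elements[OF fV partP'] .
  have P'U: "\<forall>L\<in>P'. L \<subseteq> U" using partition_onD1[OF partP'] unfolding V_def by blast
  have cardV: "card V \<ge> 2"
  proof -
    have "card U = 2 * n" by simp
    then have "card U \<ge> 4" using n2 by simp
    moreover have "card V = card U - 2" unfolding V_def using aU bU ab by (simp add: card_Diff_subset)
    ultimately show ?thesis by simp
  qed
  have r1: "card P' \<ge> 1"
  proof -
    have "V \<noteq> {}" using cardV by auto
    then have "P' \<noteq> {}" using partition_onD1[OF partP'] by auto
    then show ?thesis using fP' by (simp add: Suc_leI card_gt_0_iff)
  qed
  let ?Ins = "InsP a b P'"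
  have fib: "{P \<in> {P \<in> {P. partition_on U P} - {P. nosplit P}. fs P = a}. rem1 a (rem1 b P) = P'} = ?Ins ` OP P'"
  proof
    show "{P \<in> {P \<in> {P. partition_on U P} - {P. nosplit P}. fs P = a}. rem1 a (rem1 b P) = P'} \<subseteq> ?Ins ` OP P'"
    proof
      fix P assume "P \<in> {P \<in> {P \<in> {P. partition_on U P} - {P. nosplit P}. fs P = a}. rem1 a (rem1 b P) = P'}"
      then have P: "partition_on U P" "\<not> nosplit P" "fs P = a" "rem1 a (rem1 b P) = P'" by auto
      have "\<not> sb P a b" using fs_props(2)[OF P(2)] P(3) b_def by simp
      then show "P \<in> ?Ins ` OP P'" using tp.Ins_surj[of P] P VU by auto
    qed
  next
    show "?Ins ` OP P' \<subseteq> {P \<in> {P \<in> {P. partition_on U P} - {P. nosplit P}. fs P = a}. rem1 a (rem1 b P) = P'}"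
    proof
      fix P assume "P \<in> ?Ins ` OP P'"
      then obtain x y where o: "(x, y) \<in> OP P'" and P: "P = ?Ins (x, y)" by auto
      have pa: "partition_on U P" using tp.Ins_part[OF o] P VU by simp
      have nsb: "\<not> sb P a (B a)" using tp.Ins_nsb[OF o] P b_def by simp
      then have nns: "\<not> nosplit P" using aU unfolding nosplit_def by blast
      have "fs P = a" unfolding fs_def
      proof (rule Least_equality)
        show "a \<in> U \<and> \<not> sb P a (B a)" using aU nsb by simp
      next
        fix z assume z: "z \<in> U \<and> \<not> sb P z (B z)"
        show "a \<le> z"
        proof (rule ccontr)
          assume "\<not> a \<le> z"
          then have za: "z < a" by simp
          have zU: "z \<in> U" using z by blast
          have s1: "sb P1 z (B z)" by (rule lt1[OF zU za])
          have zb: "z \<noteq> b"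
          proof
            assume "z = b" then have "sb P1 b a" using s1 Bb by simp
            then show False using sb_sym[OF \<open>sb P1 b a\<close>] nsb1 by simp
          qed
          have Bza: "B z \<noteq> a"
          proof
            assume "B z = a" then have "B (B z) = B a" by simp
            then show False using zb unfolding b_def by simp
          qed
          have Bzb: "B z \<noteq> b"
          proof
            assume "B z = b" then have "B (B z) = B b" by simp
            then have "z = a" using Bb by simp
            then show False using za by simp
          qed
          have zna: "z \<noteq> a" using za by simp
          have "sb (rem1 b P1) z (B z)" by (rule sb_rem1[OF s1 zb Bzb])
          then have "sb P' z (B z)" unfolding P'_def by (rule sb_rem1[OF _ zna Bza])
          then have "sb P z (B z)" using tp.Ins_sb[OF o] P by simp
          then show False using z by simp
        qed
      qed
      moreover have "rem1 a (rem1 b P) = P'" using tp.Ins_rem[OF o] P by simp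
      ultimately show "P \<in> {P \<in> {P \<in> {P. partition_on U P} - {P. nosplit P}. fs P = a}. rem1 a (rem1 b P) = P'}"
        using pa nns by simp
    qed
  qed
  have GI: "G (?Ins (x, y)) = add_mset XX (add_mset XX (G P'))" if o: "(x, y) \<in> OP P'" for x y
  proof -
    have x: "x \<in> opts P'" and y: "y \<in> opts P'" using o tp.OP_mem by auto
    have aP: "a \<notin> \<Union>P'" using tp.UP tp.aV by simp
    have g1: "G (ins1 a x P') = add_mset XX (G P')"
    proof (rule G_ins1[OF fP' P'U aU aP x])
      show "\<forall>L. x = Some L \<longrightarrow> B a \<notin> L"
      proof (intro allI impI)
        fix L assume "x = Some L"
        then have "L \<in> P'" using x unfolding opts_def by auto
        then show "B a \<notin> L" using tp.UP tp.bV b_def by blast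
      qed
    qed
    have fQ1: "finite (ins1 a x P')" using fP' unfolding ins1_def by (cases x) auto
    have UQ1: "\<Union>(ins1 a x P') = insert a V" using partition_onD1[OF tp.Q1_part[OF x]] by simp
    have Q1U: "\<forall>L\<in>ins1 a x P'. L \<subseteq> U" using UQ1 VU by blast
    have g2: "G (ins1 b y (ins1 a x P')) = add_mset XX (G (ins1 a x P'))"
    proof (rule G_ins1[OF fQ1 Q1U bU tp.b_notin_Q1[OF x] tp.y_opts[OF o]])
      show "\<forall>L. y = Some L \<longrightarrow> B b \<notin> L"
      proof (intro allI impI)
        fix L assume "y = Some L"
        then have "L \<in> P'" using y unfolding opts_def by auto
        then show "B b \<notin> L" using tp.UP tp.aV Bb by blast
      qed
    qed
    show ?thesis unfolding InsP_def using g1 g2 by simp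
  qed
  have "(\<Sum>P\<in>{P \<in> {P \<in> {P. partition_on U P} - {P. nosplit P}. fs P = a}. rem1 a (rem1 b P) = P'}. F N P)
      = (\<Sum>P\<in>?Ins ` OP P'. F N P)" using fib by simp
  also have "\<dots> = (\<Sum>oo\<in>OP P'. F N (?Ins oo))" using sum.reindex[OF tp.Ins_inj, of "F N"] by (simp add: comp_def)
  also have "\<dots> = (\<Sum>oo\<in>OP P'. (if add_mset XX (add_mset XX (G P')) = N then 1 else 0) *
        mu (card P' + (if fst oo = None then 1 else 0) + (if snd oo = None then 1 else 0)))"
  proof (rule sum.cong[OF refl])
    fix oo assume o: "oo \<in> OP P'"
    obtain x y where xy: "oo = (x, y)" by (cases oo)
    show "F N (?Ins oo) = (if add_mset XX (add_mset XX (G P')) = N then 1 else 0) *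
        mu (card P' + (if fst oo = None then 1 else 0) + (if snd oo = None then 1 else 0))"
      unfolding F_def xy using GI[of x y] tp.Ins_card[of x y, OF _ fP'] o xy by simp
  qed
  also have "\<dots> = (if add_mset XX (add_mset XX (G P')) = N then 1 else 0) *
        (\<Sum>oo\<in>OP P'. mu (card P' + (if fst oo = None then 1 else 0) + (if snd oo = None then 1 else 0)))"
    by (simp add: sum_distrib_left)
  also have "\<dots> = 0" using sum_OP[OF fP' r1] by simp
  finally show ?thesis unfolding b_def P'_def .
qed

lemma cancel: "(\<Sum>P\<in>{P. partition_on U P} - {P. nosplit P}. F N P) = 0"
proof -
  let ?Xs = "{P. partition_on U P} - {P. nosplit P}"
  have fX: "finite ?Xs" using finite_parts by simp
  have "(\<Sum>P\<in>?Xs. F N P) = (\<Sum>a\<in>fs ` ?Xs. \<Sum>P\<in>{P \<in> ?Xs. fs P = a}. F N P)"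
    by (rule sum.image_gen[OF fX])
  also have "\<dots> = 0"
  proof (rule sum.neutral, rule ballI)
    fix a assume "a \<in> fs ` ?Xs"
    let ?Xa = "{P \<in> ?Xs. fs P = a}"
    let ?rem = "\<lambda>P. rem1 a (rem1 (B a) P)"
    have fXa: "finite ?Xa" by (rule finite_subset[OF _ fX]) blast
    have "(\<Sum>P\<in>?Xa. F N P) = (\<Sum>P'\<in>?rem ` ?Xa. \<Sum>P\<in>{P \<in> ?Xa. ?rem P = P'}. F N P)"
      by (rule sum.image_gen[OF fXa])
    also have "\<dots> = 0"
    proof (rule sum.neutral, rule ballI)
      fix P' assume "P' \<in> ?rem ` ?Xa"
      then obtain P1 where P1: "P1 \<in> ?Xa" "P' = ?rem P1" by blast
      then have "partition_on U P1" "\<not> nosplit P1" "fs P1 = a" by auto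
      from fiber_zero[OF this, of N] show "(\<Sum>P\<in>{P \<in> ?Xa. ?rem P = P'}. F N P) = 0" using P1(2) by simp
    qed
    finally show "(\<Sum>P\<in>?Xa. F N P) = 0" .
  qed
  finally show ?thesis .
qed

end

context arcs begin

definition Cy :: "nat set set" where "Cy = {{x, B x} | x. x \<in> U}"

lemma funpow_B: "(B ^^ k) x = (if even k then x else B x)"
  by (induction k) auto

lemma orbit: "{(B ^^ k) x | k. True} = {x, B x}"
proof
  show "{(B ^^ k) x | k. True} \<subseteq> {x, B x}" using funpow_B by auto
  have "x = (B ^^ 0) x" "B x = (B ^^ 1) x" by auto
  then show "{x, B x} \<subseteq> {(B ^^ k) x | k. True}" by blast
qed

lemma cycles_eq: "cycles (2*n, B) = Cy"
  unfolding cycles_def Cy_def using orbit by simp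

lemma arc_uniq: assumes "c \<in> Cy" "x \<in> c" shows "c = {x, B x}"
proof -
  obtain y where y: "c = {y, B y}" using assms(1) unfolding Cy_def by blast
  then have "x = y \<or> x = B y" using assms(2) by blast
  then show ?thesis
  proof
    assume "x = y" then show ?thesis using y by simp
  next
    assume "x = B y" then have "B x = y" by simp
    show ?thesis using y \<open>x = B y\<close> by (simp add: insert_commute)
  qed
qed

lemma Cy_U: "c \<in> Cy \<Longrightarrow> c \<subseteq> U" unfolding Cy_def using BU by blast

lemma Cy_in: "x \<in> U \<Longrightarrow> {x, B x} \<in> Cy" unfolding Cy_def by blast

lemma union_inj: assumes "I \<subseteq> Cy" "J \<subseteq> Cy" "\<Union>I = \<Union>J" shows "I \<subseteq> J"
proof
  fix c assume c: "c \<in> I"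
  then have cC: "c \<in> Cy" using assms by blast
  then obtain y where y: "c = {y, B y}" unfolding Cy_def by blast
  then have "y \<in> \<Union>J" using assms(3) c by blast
  then obtain c' where c': "c' \<in> J" "y \<in> c'" by blast
  then have "c' = {y, B y}" using arc_uniq assms(2) by blast
  then show "c \<in> J" using y c' by simp
qed

lemma blocks_full: assumes P: "partition_on U P" and ns: "nosplit P" and L: "L \<in> P" and x: "x \<in> L"
  shows "B x \<in> L"
proof -
  have xU: "x \<in> U" using P L x unfolding partition_on_def by blast
  then obtain L' where L': "L' \<in> P" "x \<in> L'" "B x \<in> L'" using ns unfolding nosplit_def sb_def by blast
  then have "L' = L" using part_uniq[OF P] L x by blast
  then show ?thesis using L' by simp
qed

lemma bij_Union: "bij_betw (\<lambda>Q. Union ` Q) {Q. partition_on Cy Q} ({P. partition_on U P} \<inter> {P. nosplit P})"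
proof (rule bij_betw_byWitness[where f'="\<lambda>P. (\<lambda>L. {c\<in>Cy. c \<subseteq> L}) ` P"])
  show "\<forall>Q\<in>{Q. partition_on Cy Q}. (\<lambda>L. {c\<in>Cy. c \<subseteq> L}) ` (Union ` Q) = Q"
  proof
    fix Q assume "Q \<in> {Q. partition_on Cy Q}"
    then have Q: "partition_on Cy Q" by simp
    have "\<And>I. I \<in> Q \<Longrightarrow> {c\<in>Cy. c \<subseteq> \<Union>I} = I"
    proof -
      fix I assume I: "I \<in> Q"
      have IC: "I \<subseteq> Cy" using Q I unfolding partition_on_def by blast
      show "{c\<in>Cy. c \<subseteq> \<Union>I} = I"
      proof
        show "I \<subseteq> {c\<in>Cy. c \<subseteq> \<Union>I}" using IC by blast
        show "{c\<in>Cy. c \<subseteq> \<Union>I} \<subseteq> I"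
        proof
          fix c assume c: "c \<in> {c\<in>Cy. c \<subseteq> \<Union>I}"
          then obtain y where y: "c = {y, B y}" unfolding Cy_def by blast
          then have "y \<in> \<Union>I" using c by blast
          then obtain c' where c': "c' \<in> I" "y \<in> c'" by blast
          then have "c' = {y, B y}" using arc_uniq IC by blast
          then show "c \<in> I" using y c' by simp
        qed
      qed
    qed
    then have "(\<lambda>I. {c\<in>Cy. c \<subseteq> \<Union>I}) ` Q = (\<lambda>I. I) ` Q" by (rule image_cong[OF refl])
    then show "(\<lambda>L. {c\<in>Cy. c \<subseteq> L}) ` (Union ` Q) = Q" by (simp add: image_comp comp_def)
  qed
next
  show "\<forall>P\<in>{P. partition_on U P} \<inter> {P. nosplit P}. Union ` ((\<lambda>L. {c\<in>Cy. c \<subseteq> L}) ` P) = P"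
  proof
    fix P assume "P \<in> {P. partition_on U P} \<inter> {P. nosplit P}"
    then have P: "partition_on U P" and ns: "nosplit P" by auto
    have "\<And>L. L \<in> P \<Longrightarrow> \<Union>{c\<in>Cy. c \<subseteq> L} = L"
    proof -
      fix L assume L: "L \<in> P"
      show "\<Union>{c\<in>Cy. c \<subseteq> L} = L"
      proof
        show "\<Union>{c\<in>Cy. c \<subseteq> L} \<subseteq> L" by blast
        show "L \<subseteq> \<Union>{c\<in>Cy. c \<subseteq> L}"
        proof
          fix x assume x: "x \<in> L"
          have xU: "x \<in> U" using P L x unfolding partition_on_def by blast
          have "{x, B x} \<subseteq> L" using blocks_full[OF P ns L x] x by blast
          moreover have "{x, B x} \<in> Cy" using Cy_in[OF xU] .
          ultimately show "x \<in> \<Union>{c\<in>Cy. c \<subseteq> L}" by blast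
        qed
      qed
    qed
    then have "(\<lambda>L. \<Union>{c\<in>Cy. c \<subseteq> L}) ` P = (\<lambda>L. L) ` P" by (rule image_cong[OF refl])
    then show "Union ` ((\<lambda>L. {c\<in>Cy. c \<subseteq> L}) ` P) = P" by (simp add: image_comp comp_def)
  qed
next
  show "(\<lambda>Q. Union ` Q) ` {Q. partition_on Cy Q} \<subseteq> {P. partition_on U P} \<inter> {P. nosplit P}"
  proof
    fix P assume "P \<in> (\<lambda>Q. Union ` Q) ` {Q. partition_on Cy Q}"
    then obtain Q where Q: "partition_on Cy Q" and PQ: "P = Union ` Q" by blast
    have UQ: "\<Union>Q = Cy" and dQ: "disjoint Q" and eQ: "{} \<notin> Q" using Q unfolding partition_on_def by auto
    have UCy: "\<Union>Cy = U"
    proof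
      show "\<Union>Cy \<subseteq> U" using Cy_U by (simp add: Sup_le_iff)
      show "U \<subseteq> \<Union>Cy"
      proof
        fix x assume "x \<in> U"
        then have "{x, B x} \<in> Cy" by (rule Cy_in)
        then show "x \<in> \<Union>Cy" by blast
      qed
    qed
    have "partition_on U P"
    proof (rule partition_onI)
      have "\<Union>P = \<Union>(\<Union>Q)" unfolding PQ by blast
      then show "\<Union>P = U" using UQ UCy by simp
    next
      fix p q assume p: "p \<in> P" and q: "q \<in> P" and pq: "p \<noteq> q"
      obtain I J where I: "I \<in> Q" "p = \<Union>I" and J: "J \<in> Q" "q = \<Union>J" using p q PQ by blast
      show "disjnt p q" unfolding disjnt_def
      proof (rule ccontr)
        assume "p \<inter> q \<noteq> {}"
        then obtain x where x: "x \<in> p" "x \<in> q" by blast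
        obtain c where c: "c \<in> I" "x \<in> c" using x I by blast
        obtain c' where c': "c' \<in> J" "x \<in> c'" using x J by blast
        have "c \<in> \<Union>Q" using c(1) I(1) by blast
        then have cC: "c \<in> Cy" using UQ by simp
        have "c' \<in> \<Union>Q" using c'(1) J(1) by blast
        then have cC': "c' \<in> Cy" using UQ by simp
        have "c = {x, B x}" by (rule arc_uniq[OF cC c(2)])
        moreover have "c' = {x, B x}" by (rule arc_uniq[OF cC' c'(2)])
        ultimately have "c \<in> J" using c' by simp
        then have "I = J" using part_uniq[OF Q I(1) J(1) c(1)] by simp
        then show False using pq I J by simp
      qed
    next
      show "{} \<notin> P"
      proof
        assume "{} \<in> P"
        then obtain I where I: "I \<in> Q" "\<Union>I = {}" using PQ by blast
        have "I \<noteq> {}" using eQ I by blast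
        then obtain c where c: "c \<in> I" by blast
        then have "c \<in> Cy" using UQ I by blast
        then have "c \<noteq> {}" unfolding Cy_def by blast
        then show False using I c by blast
      qed
    qed
    moreover have "nosplit P" unfolding nosplit_def sb_def
    proof
      fix x assume xU: "x \<in> U"
      then have "{x, B x} \<in> \<Union>Q" using Cy_in UQ by simp
      then obtain I where I: "I \<in> Q" "{x, B x} \<in> I" by blast
      then have "\<Union>I \<in> P" "x \<in> \<Union>I" "B x \<in> \<Union>I" using PQ by auto
      then show "\<exists>L\<in>P. x \<in> L \<and> B x \<in> L" by blast
    qed
    ultimately show "P \<in> {P. partition_on U P} \<inter> {P. nosplit P}" by simp
  qed
next
  show "(\<lambda>P. (\<lambda>L. {c\<in>Cy. c \<subseteq> L}) ` P) ` ({P. partition_on U P} \<inter> {P. nosplit P}) \<subseteq> {Q. partition_on Cy Q}"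
  proof
    fix Q assume "Q \<in> (\<lambda>P. (\<lambda>L. {c\<in>Cy. c \<subseteq> L}) ` P) ` ({P. partition_on U P} \<inter> {P. nosplit P})"
    then obtain P where P: "partition_on U P" and ns: "nosplit P" and QP: "Q = (\<lambda>L. {c\<in>Cy. c \<subseteq> L}) ` P" by blast
    have arcin: "\<And>L y. L \<in> P \<Longrightarrow> y \<in> L \<Longrightarrow> {y, B y} \<subseteq> L" using blocks_full[OF P ns] by blast
    have "partition_on Cy Q"
    proof (rule partition_onI)
      show "\<Union>Q = Cy"
      proof
        show "\<Union>Q \<subseteq> Cy" using QP by blast
        show "Cy \<subseteq> \<Union>Q"
        proof
          fix c assume c: "c \<in> Cy"
          then obtain y where y: "c = {y, B y}" "y \<in> U" unfolding Cy_def by blast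
          then obtain L where L: "L \<in> P" "y \<in> L" using partition_onD1[OF P] by blast
          then have "c \<subseteq> L" using arcin y by blast
          then show "c \<in> \<Union>Q" using QP L c by blast
        qed
      qed
    next
      fix p q assume p: "p \<in> Q" and q: "q \<in> Q" and pq: "p \<noteq> q"
      obtain L where L: "L \<in> P" "p = {c\<in>Cy. c \<subseteq> L}" using p QP by blast
      obtain L' where L': "L' \<in> P" "q = {c\<in>Cy. c \<subseteq> L'}" using q QP by blast
      show "disjnt p q" unfolding disjnt_def
      proof (rule ccontr)
        assume "p \<inter> q \<noteq> {}"
        then obtain c where c: "c \<in> Cy" "c \<subseteq> L" "c \<subseteq> L'" using L L' by blast
        then obtain y where y: "c = {y, B y}" unfolding Cy_def by blast
        then have "y \<in> L" "y \<in> L'" using c by auto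
        then have "L = L'" using part_uniq[OF P L(1) L'(1)] by blast
        then show False using pq L L' by simp
      qed
    next
      show "{} \<notin> Q"
      proof
        assume "{} \<in> Q"
        then obtain L where L: "L \<in> P" "{c\<in>Cy. c \<subseteq> L} = {}" using QP by auto
        have "L \<noteq> {}" using partition_onD3[OF P] L by blast
        then obtain y where y: "y \<in> L" by blast
        then have yU: "y \<in> U" using partition_onD1[OF P] L by blast
        have "{y, B y} \<in> {c\<in>Cy. c \<subseteq> L}" using arcin[OF L(1) y] Cy_in[OF yU] by blast
        then show False using L by simp
      qed
    qed
    then show "Q \<in> {Q. partition_on Cy Q}" by simp
  qed
qed

lemma pi_eq: "pi_A (2*n, B) N = (\<Sum>P\<in>{P. partition_on U P} \<inter> {P. nosplit P}. F N P)"
proof -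
  have "pi_A (2*n, B) N = (\<Sum>Q\<in>{Q. partition_on Cy Q}. F N (Union ` Q))"
    unfolding pi_A_def cycles_eq
  proof (rule sum.cong[OF refl])
    fix Q assume "Q \<in> {Q. partition_on Cy Q}"
    then have Q: "partition_on Cy Q" by simp
    have QC: "\<And>I. I \<in> Q \<Longrightarrow> I \<subseteq> Cy" using Q unfolding partition_on_def by blast
    have inj: "inj_on Union Q"
    proof (rule inj_onI)
      fix I J assume "I \<in> Q" "J \<in> Q" "\<Union>I = \<Union>J"
      then show "I = J" using union_inj QC by (metis subset_antisym)
    qed
    have cd: "card (Union ` Q) = card Q" using card_image[OF inj] .
    have IU: "\<And>I. I \<in> Q \<Longrightarrow> \<Union>I \<subseteq> U" using QC Cy_U by blast
    have "G (Union ` Q) = (\<Sum>I\<in>Q. br (\<Union>I))" unfolding G_def using sum.reindex[OF inj, of br] by (simp add: comp_def)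
    also have "\<dots> = (\<Sum>I\<in>Q. bracket (restr (2 * n, B) (\<Union>I)))"
      unfolding br_def using restr_sp IU by (intro sum.cong) auto
    finally show "(- 1) ^ (card Q - 1) * int (fact (card Q - 1)) *
          (if (\<Sum>I\<in>Q. bracket (restr (2 * n, B) (\<Union>I))) = N then 1 else 0) = F N (Union ` Q)"
      unfolding F_def mu_def cd by simp
  qed
  also have "\<dots> = (\<Sum>P\<in>{P. partition_on U P} \<inter> {P. nosplit P}. F N P)"
    by (rule sum.reindex_bij_betw[OF bij_Union])
  finally show ?thesis .
qed

lemma pi'_eq: "pi'_A (2*n, B) N = (\<Sum>P\<in>{P. partition_on U P}. F N P)"
  unfolding pi'_A_def
proof (rule sum.cong)
  show "{P. partition_on {1..fst (2 * n, B)} P} = {P. partition_on U P}" by simp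
next
  fix P assume "P \<in> {P. partition_on U P}"
  then have P: "partition_on U P" by simp
  have "(\<Sum>L\<in>P. bracket (restr (2 * n, B) L)) = G P"
    unfolding G_def br_def
  proof (rule sum.cong[OF refl])
    fix L assume "L \<in> P"
    then have "L \<subseteq> U" using partition_onD1[OF P] by blast
    then show "bracket (restr (2 * n, B) L) = bracket (sp L)" using restr_sp by simp
  qed
  then show "(- 1) ^ (card P - 1) * int (fact (card P - 1)) *
          (if (\<Sum>L\<in>P. bracket (restr (2 * n, B) L)) = N then 1 else 0) = F N P"
    unfolding F_def mu_def by simp
qed

lemma main_eq: "pi_A (2*n, B) N = pi'_A (2*n, B) N"
proof -
  have "pi'_A (2*n, B) N = (\<Sum>P\<in>{P. partition_on U P} \<inter> {P. nosplit P}. F N P) + (\<Sum>P\<in>{P. partition_on U P} - {P. nosplit P}. F N P)"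
    unfolding pi'_eq by (rule sum.Int_Diff[OF finite_parts])
  then show ?thesis using cancel pi_eq by simp
qed

lemma main_fpf: assumes "pi'_A (2*n, B) N \<noteq> 0" "c \<in># N" shows "\<exists>a\<in>c. fpf_involution a"
proof -
  have "(\<Sum>P\<in>{P. partition_on U P} \<inter> {P. nosplit P}. F N P) \<noteq> 0" using assms(1) main_eq pi_eq by simp
  then obtain P where P: "P \<in> {P. partition_on U P} \<inter> {P. nosplit P}" and FP: "F N P \<noteq> 0"
    by (meson sum.not_neutral_contains_not_neutral)
  have Pp: "partition_on U P" and ns: "nosplit P" using P by auto
  have GP: "G P = N" using FP unfolding F_def by (auto split: if_splits)
  have fP: "finite P" by (rule finite_elements[OF _ Pp]) simp
  have "c \<in># G P" using assms(2) by (simp only: GP)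
  then have "c \<in># (\<Sum>L\<in>P. br L)" by (simp only: G_def)
  from mem_sum_mset[OF fP this] obtain L where L: "L \<in> P" "c \<in># br L" by blast
  have UP: "U = \<Union>P" by (rule partition_onD1[OF Pp])
  have "L \<subseteq> \<Union>P" using L(1) by (rule Union_upper)
  then have LU: "L \<subseteq> U" by (simp only: UP)
  have fL: "full L = L"
  proof
    show "full L \<subseteq> L" unfolding full_def by blast
    show "L \<subseteq> full L"
    proof
      fix x assume x: "x \<in> L"
      have "B x \<in> L" by (rule blocks_full[OF Pp ns L(1) x])
      then show "x \<in> full L" unfolding full_def using x by simp
    qed
  qed
  have "c \<in># image_mset rotclass (C L)" using L(2) unfolding br_C .
  then obtain a where a: "a \<in># C L" "c = rotclass a" by auto
  obtain T where T: "T \<subseteq> L" "full T = T" "a = sp T" using C_mem[OF LU fL a(1)] by blast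
  have TU: "T \<subseteq> U" using T(1) LU by (rule subset_trans)
  have "fpf_involution a" using fpf_sp[OF TU T(2)] T(3) by simp
  then show ?thesis using a(2) in_rotclass by blast
qed

end

theorem theorem18:
  fixes n :: nat and B :: "nat \<Rightarrow> nat"
  assumes "n \<ge> 2"
    and "B permutes {1..2*n}"
    and "\<forall>x. B (B x) = x"
    and "\<forall>x\<in>{1..2*n}. B x \<noteq> x"
  shows "pi_A (2*n, B) = pi'_A (2*n, B)
    \<and> (\<forall>N. pi'_A (2*n, B) N \<noteq> 0 \<longrightarrow>
          (\<forall>c\<in>#N. \<exists>a\<in>c. fpf_involution a))"
proof -
  interpret arcs n B by (rule arcs.intro[OF assms])
  have e: "pi_A (2*n, B) = pi'_A (2*n, B)" by (rule ext) (rule main_eq)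
  moreover have "\<forall>N. pi'_A (2*n, B) N \<noteq> 0 \<longrightarrow> (\<forall>c\<in>#N. \<exists>a\<in>c. fpf_involution a)"
    using main_fpf by blast
  ultimately show ?thesis by (rule conjI)
qed

end
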